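(* For every $s>0$, $H^s(\mathbb{Z}_2)=A^s(\mathbb{Z}_2)$.
   Context: $\mathbb{Z}_2$ is the ring of 2-adic integers with 2-adic absolute value $|\cdot|_2$ and Haar probability measure $\mu$. $\Lambda=\mathbb{Q}_2/\mathbb{Z}_2$; for $f\in L^2(\mathbb{Z}_2)$, $\mathcal F(f)(\lambda)=\int_{\mathbb{Z}_2}e^{-2i\pi\lambda x}f(x)\,d\mu(x)$; $H^s(\mathbb{Z}_2)$ is the completion of the locally constant functions on $\mathbb{Z}_2$ for the norm $\|f\|_{H^s(\mathbb{Z}_2)}=\big(\sum_{\lambda\in\Lambda}(1+|\lambda|_2)^{2s}|\mathcal F(f)(\lambda)|^2\big)^{1/2}$ (for $s>0$ a subspace of $L^2(\mathbb{Z}_2)$). For $n\in\mathbb{N}$, $V_n$ is the span in $L^2(\mathbb{Z}_2)$ of ${\bf 1}_{\mathbb{Z}_2}$ and the indicators ${\bf 1}_{k+2^j\mathbb{Z}_2}$ for $j\le n$, $k\in\mathbb{Z}$; $P_n$ is the $L^2(\mathbb{Z}_2)$-orthogonal projection onto $V_n$. $A^s(\mathbb{Z}_2)=\{f\in L^2(\mathbb{Z}_2):\sum_{n\ge0}\|f-P_nf\|_{L^2(\mathbb{Z}_2)}^2 2^{2ns}<\infty\}$, with norm $\|P_0f\|_{L^2}+\big(\sum_{n\ge0}\|f-P_nf\|_{L^2}^22^{2ns}\big)^{1/2}$. *)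

theory Defs
  imports "HOL-Probability.Probability"
begin

text \<open>The 2-adic integers are modelled by their binary digit sequences:
  x = sum_i (if x i then 2^i else 0).  The topology is the product topology on
  nat => bool (bool discrete), which is the 2-adic topology.\<close>
type_synonym Z2 = "nat \<Rightarrow> bool"

text \<open>Haar probability measure on Z2: the digits are independent fair coins.\<close>
definition haar2 :: "Z2 measure" where
  "haar2 = PiM UNIV (\<lambda>_. measure_pmf (bernoulli_pmf (1/2)))"

text \<open>x mod 2^j, as an integer in {0..<2^j}\<close>
definition trunc2 :: "Z2 \<Rightarrow> nat \<Rightarrow> int" where
  "trunc2 x j = (\<Sum>i<j. if x i then 2^i else 0)"

text \<open>L^2(Z2) (as a set of representatives) and its norm\<close>
definition L2 :: "(Z2 \<Rightarrow> complex) set" where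
  "L2 = {f. f \<in> borel_measurable haar2 \<and> integrable haar2 (\<lambda>x. (cmod (f x))^2)}"

definition L2norm :: "(Z2 \<Rightarrow> complex) \<Rightarrow> real" where
  "L2norm f = sqrt (integral\<^sup>L haar2 (\<lambda>x. (cmod (f x))^2))"

text \<open>Lambda = Q2/Z2, represented by the dyadic rationals in [0,1)\<close>
definition Lam :: "rat set" where
  "Lam = {q. 0 \<le> q \<and> q < 1 \<and> (\<exists>m::nat. q * 2^m \<in> \<int>)}"

definition dexp :: "rat \<Rightarrow> nat" where
  "dexp q = (LEAST m::nat. q * 2^m \<in> \<int>)"

definition abs2 :: "rat \<Rightarrow> real" where
  "abs2 q = (if q = 0 then 0 else 2 ^ dexp q)"

text \<open>the character x |-> exp(-2 i pi lambda x); lambda x mod 1 = q * (x mod 2^m)\<close>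
definition chr :: "rat \<Rightarrow> Z2 \<Rightarrow> complex" where
  "chr q x = cis (- 2 * pi * real_of_rat q * real_of_int (trunc2 x (dexp q)))"

definition fourier :: "(Z2 \<Rightarrow> complex) \<Rightarrow> rat \<Rightarrow> complex" where
  "fourier f q = integral\<^sup>L haar2 (\<lambda>x. chr q x * f x)"

definition Hs_norm :: "real \<Rightarrow> (Z2 \<Rightarrow> complex) \<Rightarrow> real" where
  "Hs_norm s f = sqrt (infsum (\<lambda>q. (1 + abs2 q) powr (2 * s) * (cmod (fourier f q))^2) Lam)"

definition locally_constant :: "(Z2 \<Rightarrow> complex) \<Rightarrow> bool" where
  "locally_constant f \<longleftrightarrow> (\<forall>x. \<exists>U. open U \<and> x \<in> U \<and> (\<forall>y\<in>U. f y = f x))"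

text \<open>H^s(Z2), s > 0: the completion of the locally constant functions for the
  H^s norm, realised inside L^2: limits in L^2 of H^s-Cauchy sequences of locally
  constant functions.\<close>
definition Hs :: "real \<Rightarrow> (Z2 \<Rightarrow> complex) set" where
  "Hs s = {f \<in> L2. \<exists>g :: nat \<Rightarrow> Z2 \<Rightarrow> complex.
      (\<forall>n. locally_constant (g n)) \<and>
      (\<forall>e>0. \<exists>N. \<forall>m\<ge>N. \<forall>n\<ge>N. Hs_norm s (\<lambda>x. g m x - g n x) < e) \<and>
      (\<lambda>n. L2norm (\<lambda>x. g n x - f x)) \<longlonglongrightarrow> 0}"

text \<open>generators of V_n: the constant 1 and the indicators of k + 2^j Z2, j \<le> n, k \<in> Z\<close>
definition Vgens :: "nat \<Rightarrow> (Z2 \<Rightarrow> complex) set" where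
  "Vgens n = insert (\<lambda>x. 1)
     {(\<lambda>x. if trunc2 x j = k mod 2^j then 1 else 0) | j k. j \<le> n \<and> (k::int) \<in> UNIV}"

definition V :: "nat \<Rightarrow> (Z2 \<Rightarrow> complex) set" where
  "V n = {g. \<exists>S c. finite S \<and> S \<subseteq> Vgens n \<and> g = (\<lambda>x. \<Sum>h\<in>S. c h * h x)}"

definition P :: "nat \<Rightarrow> (Z2 \<Rightarrow> complex) \<Rightarrow> (Z2 \<Rightarrow> complex)" where
  "P n f = (SOME g. g \<in> V n \<and>
      (\<forall>h\<in>V n. integral\<^sup>L haar2 (\<lambda>x. (f x - g x) * cnj (h x)) = 0))"

definition As :: "real \<Rightarrow> (Z2 \<Rightarrow> complex) set" where
  "As s = {f \<in> L2. summable (\<lambda>n. (L2norm (\<lambda>x. f x - P n f x))^2 * 2 powr (2 * real n * s))}"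

end

theory Submission
  imports Defs
begin

lemma trunc2_0[simp]: "trunc2 x 0 = 0" by (simp add: trunc2_def)
lemma trunc2_Suc: "trunc2 x (Suc n) = trunc2 x n + (if x n then 2^n else 0)"
  by (simp add: trunc2_def)
lemma trunc2_range: "0 \<le> trunc2 x n \<and> trunc2 x n < 2^n"
  by (induction n) (auto simp: trunc2_Suc)
lemma trunc2_eq_iff: "trunc2 x n = trunc2 y n \<longleftrightarrow> (\<forall>i<n. x i = y i)"
proof (induction n)
  case 0 then show ?case by simp
next
  case (Suc n)
  have rx: "0 \<le> trunc2 x n" "trunc2 x n < 2^n" and ry: "0 \<le> trunc2 y n" "trunc2 y n < 2^n"
    using trunc2_range by auto
  show ?case
  proof
    assume h: "trunc2 x (Suc n) = trunc2 y (Suc n)"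
    have "x n = y n"
    proof (rule ccontr)
      assume "x n \<noteq> y n"
      then show False using h rx ry by (cases "x n") (auto simp: trunc2_Suc)
    qed
    with h have "trunc2 x n = trunc2 y n" by (simp add: trunc2_Suc)
    with Suc \<open>x n = y n\<close> show "\<forall>i<Suc n. x i = y i" by (auto simp: less_Suc_eq)
  next
    assume "\<forall>i<Suc n. x i = y i"
    with Suc show "trunc2 x (Suc n) = trunc2 y (Suc n)" by (simp add: trunc2_Suc)
  qed
qed

lemma trunc2_mono_eq: "trunc2 x m = trunc2 y m \<Longrightarrow> n \<le> m \<Longrightarrow> trunc2 x n = trunc2 y n"
  by (auto simp: trunc2_eq_iff)

definition wit :: "int \<Rightarrow> Z2" where "wit k = (\<lambda>i. bit k i)"

lemma trunc2_wit_take: "trunc2 (wit k) n = take_bit n k"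
  by (induction n) (auto simp: trunc2_Suc wit_def take_bit_Suc_from_most)

lemma trunc2_wit: "0 \<le> k \<Longrightarrow> k < 2^n \<Longrightarrow> trunc2 (wit k) n = k"
  by (simp add: trunc2_wit_take take_bit_int_eq_self)

definition cyl :: "nat \<Rightarrow> int \<Rightarrow> Z2 set" where "cyl n k = {x. trunc2 x n = k}"

abbreviation "B \<equiv> (\<lambda>_::nat. measure_pmf (bernoulli_pmf (1/2)))"

lemma prob_haar: "prob_space haar2"
  unfolding haar2_def by (intro prob_space_PiM) (simp add: prob_space_measure_pmf)

lemma space_haar[simp]: "space haar2 = UNIV"
  by (simp add: haar2_def space_PiM)
lemma sets_B[simp]: "sets (B i) = UNIV" by simp

lemma cyl_emb: assumes "0 \<le> k" "k < 2^n"
  shows "cyl n k = prod_emb UNIV B {..<n} (PiE {..<n} (\<lambda>i. {bit k i}))"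
proof -
  have "cyl n k = {x. \<forall>i<n. x i = wit k i}"
    using trunc2_eq_iff[of _ n "wit k"] trunc2_wit[OF assms] by (auto simp: cyl_def)
  then show ?thesis by (auto simp: prod_emb_def space_PiM PiE_def Pi_def wit_def extensional_def restrict_def)
qed

interpretation BP: product_prob_space B UNIV
  by unfold_locales (simp add: prob_space_measure_pmf)

lemma cyl_sets[measurable]: "cyl n k \<in> sets haar2"
proof (cases "0 \<le> k \<and> k < 2^n")
  case True
  then show ?thesis unfolding cyl_emb[OF conjunct1[OF True] conjunct2[OF True]] haar2_def
    by (intro sets_PiM_I) auto
next
  case False
  then have "cyl n k = {}" using trunc2_range by (auto simp: cyl_def)
  then show ?thesis by simp
qed

lemma measure_cyl: assumes "0 \<le> k" "k < 2^n" shows "measure haar2 (cyl n k) = 1/2^n"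
proof -
  have "measure haar2 (cyl n k) = (\<Prod>i\<in>{..<n}. measure (B i) {bit k i})"
    unfolding cyl_emb[OF assms] haar2_def by (rule BP.measure_PiM_emb) auto
  also have "\<dots> = (\<Prod>i\<in>{..<n}. 1/2)"
    by (intro prod.cong) (auto simp: measure_pmf_single pmf_bernoulli_True pmf_bernoulli_False)
  finally show ?thesis by (simp add: power_one_over)
qed

definition Dn :: "nat \<Rightarrow> (Z2 \<Rightarrow> complex) \<Rightarrow> bool" where
  "Dn n g \<longleftrightarrow> (\<forall>x y. trunc2 x n = trunc2 y n \<longrightarrow> g x = g y)"

abbreviation ind :: "nat \<Rightarrow> int \<Rightarrow> Z2 \<Rightarrow> complex" where
  "ind n k \<equiv> indicator (cyl n k)"

lemma Dn_repr: assumes "Dn n g"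
  shows "g x = (\<Sum>k\<in>{0..<2^n}. g (wit k) * ind n k x)"
proof -
  have "(\<Sum>k\<in>{0..<2^n}. g (wit k) * ind n k x) = (\<Sum>k\<in>{0..<2^n}. if k = trunc2 x n then g (wit k) else 0)"
    by (intro sum.cong) (auto simp: cyl_def indicator_def)
  also have "\<dots> = g (wit (trunc2 x n))" using trunc2_range[of x n] by (simp add: sum.delta')
  also have "\<dots> = g x" using assms trunc2_wit[of "trunc2 x n" n] trunc2_range[of x n]
    unfolding Dn_def by metis
  finally show ?thesis by simp
qed

lemma Dn_wit: "Dn n g \<Longrightarrow> x \<in> cyl n k \<Longrightarrow> g x = g (wit k)"
  using trunc2_wit[of k n] trunc2_range[of x n] unfolding Dn_def cyl_def by auto

lemma ind_mult: "(ind n k x) * (f x :: complex) = indicator (cyl n k) x *\<^sub>R f x"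
  by (simp add: indicator_def)

lemma integrable_ind: "integrable haar2 f \<Longrightarrow> integrable haar2 (\<lambda>x. ind n k x * f x)"
  unfolding ind_mult by (intro integrable_mult_indicator) auto

lemma integrable_ind1: "integrable haar2 (\<lambda>x. ind n k x)"
proof -
  interpret prob_space haar2 by (rule prob_haar)
  show ?thesis using integrable_ind[of "\<lambda>_. 1" n k] by simp
qed

lemma integral_ind1: assumes "0 \<le> k" "k < 2^n"
  shows "integral\<^sup>L haar2 (\<lambda>x. ind n k x) = 1/2^n"
proof -
  interpret prob_space haar2 by (rule prob_haar)
  have "integral\<^sup>L haar2 (\<lambda>x. ind n k x) = integral\<^sup>L haar2 (\<lambda>x. complex_of_real (indicator (cyl n k) x))"
    by (intro Bochner_Integration.integral_cong) (auto simp: indicator_def)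
  also have "\<dots> = of_real (measure haar2 (cyl n k))"
    by (subst integral_complex_of_real) simp
  finally show ?thesis using measure_cyl[OF assms] by simp
qed

lemma Dn_integrable_mult:
  assumes "Dn n h" "integrable haar2 f"
  shows "integrable haar2 (\<lambda>x. h x * f x)"
    "integral\<^sup>L haar2 (\<lambda>x. h x * f x) = (\<Sum>k\<in>{0..<2^n}. h (wit k) * integral\<^sup>L haar2 (\<lambda>x. ind n k x * f x))"
proof -
  have eq: "(\<lambda>x. h x * f x) = (\<lambda>x. \<Sum>k\<in>{0..<2^n}. h (wit k) * (ind n k x * f x))"
    by (rule ext, subst Dn_repr[OF assms(1)], simp only: sum_distrib_right mult.assoc)
  show "integrable haar2 (\<lambda>x. h x * f x)" unfolding eq
    using integrable_ind[OF assms(2)] by auto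
  show "integral\<^sup>L haar2 (\<lambda>x. h x * f x) = (\<Sum>k\<in>{0..<2^n}. h (wit k) * integral\<^sup>L haar2 (\<lambda>x. ind n k x * f x))"
    unfolding eq
    using integrable_ind[OF assms(2)] by (subst Bochner_Integration.integral_sum) auto
qed

lemma Dn_integrable: assumes "Dn n h" shows "integrable haar2 h"
  "integral\<^sup>L haar2 h = (\<Sum>k\<in>{0..<2^n}. h (wit k)) / 2^n"
proof -
  interpret prob_space haar2 by (rule prob_haar)
  show "integrable haar2 h" using Dn_integrable_mult(1)[OF assms, of "\<lambda>_. 1"] by simp
  have "integral\<^sup>L haar2 h = (\<Sum>k\<in>{0..<2^n}. h (wit k) * integral\<^sup>L haar2 (\<lambda>x. ind n k x * 1))"
    using Dn_integrable_mult(2)[OF assms, of "\<lambda>_. 1"] by simp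
  also have "\<dots> = (\<Sum>k\<in>{0..<2^n}. h (wit k) / 2^n)"
    by (intro sum.cong) (auto simp: integral_ind1)
  finally show "integral\<^sup>L haar2 h = (\<Sum>k\<in>{0..<2^n}. h (wit k)) / 2^n"
    unfolding sum_divide_distrib .
qed

lemma Dn_measurable: "Dn n h \<Longrightarrow> h \<in> borel_measurable haar2"
  using Dn_integrable(1) borel_measurable_integrable by blast

lemma DnD: "Dn n g \<Longrightarrow> trunc2 x n = trunc2 y n \<Longrightarrow> g x = g y"
  unfolding Dn_def by blast
lemma DnI: "(\<And>x y. trunc2 x n = trunc2 y n \<Longrightarrow> g x = g y) \<Longrightarrow> Dn n g"
  unfolding Dn_def by blast
lemma Dn_mono: assumes "Dn n g" "n \<le> m" shows "Dn m g"
proof (rule DnI)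
  fix x y assume "trunc2 x m = trunc2 y m"
  then have "trunc2 x n = trunc2 y n" using trunc2_mono_eq assms(2) by blast
  then show "g x = g y" by (rule DnD[OF assms(1)])
qed

lemma Dn_ind: "j \<le> n \<Longrightarrow> Dn n (ind j k)"
  by (rule Dn_mono[of j]) (auto intro!: DnI simp: cyl_def indicator_def)

lemma Dn_const[simp]: "Dn n (\<lambda>x. c)" by (rule DnI) simp
lemma Dn_add: "Dn n f \<Longrightarrow> Dn n g \<Longrightarrow> Dn n (\<lambda>x. f x + g x)"
  by (rule DnI) (metis DnD)
lemma Dn_diff: "Dn n f \<Longrightarrow> Dn n g \<Longrightarrow> Dn n (\<lambda>x. f x - g x)"
  by (rule DnI) (metis DnD)
lemma Dn_mult: "Dn n f \<Longrightarrow> Dn n g \<Longrightarrow> Dn n (\<lambda>x. f x * g x)"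
  by (rule DnI) (metis DnD)
lemma Dn_comp: "Dn n f \<Longrightarrow> Dn n (\<lambda>x. F (f x))"
  by (rule DnI) (metis DnD)
lemma Dn_cnj: "Dn n f \<Longrightarrow> Dn n (\<lambda>x. cnj (f x))"
  by (rule Dn_comp)
lemma Dn_sum: "finite S \<Longrightarrow> (\<And>h. h \<in> S \<Longrightarrow> Dn n h) \<Longrightarrow> Dn n (\<lambda>x. \<Sum>h\<in>S. c h * h x)"
proof (induction S rule: finite_induct)
  case empty then show ?case by simp
next
  case (insert a F)
  have eq: "(\<lambda>x. \<Sum>h\<in>insert a F. c h * h x) = (\<lambda>x. c a * a x + (\<Sum>h\<in>F. c h * h x))"
    using insert(1,2) by simp
  have "Dn n a" using insert(4) by blast
  then have "Dn n (\<lambda>x. c a * a x)" using Dn_mult[OF Dn_const[of n "c a"]] by blast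
  moreover have "Dn n (\<lambda>x. \<Sum>h\<in>F. c h * h x)" using insert by blast
  ultimately show ?case unfolding eq by (rule Dn_add)
qed

definition E :: "nat \<Rightarrow> (Z2 \<Rightarrow> complex) \<Rightarrow> Z2 \<Rightarrow> complex" where
  "E n f x = 2^n * integral\<^sup>L haar2 (\<lambda>y. ind n (trunc2 x n) y * f y)"

lemma Dn_E: "Dn n (E n f)" by (rule DnI) (simp add: E_def)

lemma E_wit: "0 \<le> k \<Longrightarrow> k < 2^n \<Longrightarrow> E n f (wit k) = 2^n * integral\<^sup>L haar2 (\<lambda>y. ind n k y * f y)"
  by (simp add: E_def trunc2_wit)

lemma E_orth:
  assumes f: "integrable haar2 f" and h: "Dn n h"
  shows "integral\<^sup>L haar2 (\<lambda>x. h x * (f x - E n f x)) = 0"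
proof -
  have i1: "integrable haar2 (\<lambda>x. h x * f x)" by (rule Dn_integrable_mult(1)[OF h f])
  have i2: "integrable haar2 (\<lambda>x. h x * E n f x)" by (rule Dn_integrable(1)[OF Dn_mult[OF h Dn_E]])
  have "integral\<^sup>L haar2 (\<lambda>x. h x * E n f x) = (\<Sum>k\<in>{0..<2^n}. h (wit k) * E n f (wit k)) / 2^n"
    by (rule Dn_integrable(2)[OF Dn_mult[OF h Dn_E]])
  also have "\<dots> = (\<Sum>k\<in>{0..<2^n}. h (wit k) * integral\<^sup>L haar2 (\<lambda>x. ind n k x * f x))"
    unfolding sum_divide_distrib by (intro sum.cong refl) (simp add: E_wit)
  also have "\<dots> = integral\<^sup>L haar2 (\<lambda>x. h x * f x)"
    by (rule Dn_integrable_mult(2)[OF h f, symmetric])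
  finally have eq: "integral\<^sup>L haar2 (\<lambda>x. h x * E n f x) = integral\<^sup>L haar2 (\<lambda>x. h x * f x)" .
  have "(\<lambda>x. h x * (f x - E n f x)) = (\<lambda>x. h x * f x - h x * E n f x)"
    by (simp add: right_diff_distrib)
  then have "integral\<^sup>L haar2 (\<lambda>x. h x * (f x - E n f x)) = integral\<^sup>L haar2 (\<lambda>x. h x * f x) - integral\<^sup>L haar2 (\<lambda>x. h x * E n f x)"
    using Bochner_Integration.integral_diff[OF i1 i2] by simp
  then show ?thesis using eq by simp
qed

lemma E_Dn: assumes "Dn n g" shows "E n g = g"
proof
  fix x
  let ?k = "trunc2 x n"
  have r: "0 \<le> ?k" "?k < 2^n" using trunc2_range by auto
  have "integral\<^sup>L haar2 (\<lambda>y. ind n ?k y * g y) = (\<Sum>k\<in>{0..<2^n}. ind n ?k (wit k) * g (wit k)) / 2^n"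
    by (rule Dn_integrable(2)[OF Dn_mult[OF Dn_ind assms]]) simp
  also have "\<dots> = g (wit ?k) / 2^n"
    using r by (subst sum.cong[where h="\<lambda>k. if k = ?k then g (wit k) else 0"])
      (auto simp: indicator_def cyl_def trunc2_wit)
  finally show "E n g x = g x"
    using Dn_wit[OF assms, of x ?k] by (simp add: E_def cyl_def)
qed

lemma sq_sum_le: "((x::real) + y)^2 \<le> 2 * x^2 + 2 * y^2"
proof -
  have "0 \<le> (x - y)^2" by simp
  then show ?thesis unfolding power2_diff power2_sum by linarith
qed

lemma t_le: "0 \<le> (t::real) \<Longrightarrow> t \<le> 1 + t^2"
proof -
  assume "0 \<le> t"
  have "0 \<le> (t - 1)^2" by simp
  then show ?thesis unfolding power2_diff using \<open>0 \<le> t\<close> by simp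
qed

lemma cmod_diff_sq_le: "(cmod (a - b))^2 \<le> 2 * (cmod a)^2 + 2 * (cmod b)^2"
proof -
  have "cmod (a - b) \<le> cmod a + cmod b" by (rule norm_triangle_ineq4)
  then have "(cmod (a - b))^2 \<le> (cmod a + cmod b)^2" by (intro power_mono) auto
  also have "\<dots> \<le> 2 * (cmod a)^2 + 2 * (cmod b)^2" by (rule sq_sum_le)
  finally show ?thesis .
qed

lemma cmod_add_sq_le: "(cmod (a + b))^2 \<le> 2 * (cmod a)^2 + 2 * (cmod b)^2"
  using cmod_diff_sq_le[of a "-b"] by simp

lemma L2_integrable: assumes "f \<in> L2" shows "integrable haar2 f"
proof -
  interpret prob_space haar2 by (rule prob_haar)
  have m: "f \<in> borel_measurable haar2" and i: "integrable haar2 (\<lambda>x. (cmod (f x))^2)"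
    using assms by (auto simp: L2_def)
  have i2: "integrable haar2 (\<lambda>x. 1 + (cmod (f x))^2)" using i by simp
  have ae: "AE x in haar2. norm (f x) \<le> norm (1 + (cmod (f x))^2)"
  proof (intro AE_I2)
    fix x
    have "cmod (f x) \<le> 1 + (cmod (f x))^2" by (rule t_le) simp
    moreover have "norm (1 + (cmod (f x))^2) = 1 + (cmod (f x))^2" by simp
    ultimately show "norm (f x) \<le> norm (1 + (cmod (f x))^2)" by simp
  qed
  show ?thesis by (rule Bochner_Integration.integrable_bound[OF i2 m ae])
qed

lemma L2_I: "f \<in> borel_measurable haar2 \<Longrightarrow> integrable haar2 (\<lambda>x. (cmod (f x))^2) \<Longrightarrow> f \<in> L2"
  by (simp add: L2_def)

lemma L2_meas: "f \<in> L2 \<Longrightarrow> f \<in> borel_measurable haar2" by (simp add: L2_def)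
lemma L2_sq: "f \<in> L2 \<Longrightarrow> integrable haar2 (\<lambda>x. (cmod (f x))^2)" by (simp add: L2_def)

lemma L2_diff: assumes "f \<in> L2" "g \<in> L2" shows "(\<lambda>x. f x - g x) \<in> L2"
proof (rule L2_I)
  have [measurable]: "f \<in> borel_measurable haar2" "g \<in> borel_measurable haar2" using assms L2_meas by auto
  show "(\<lambda>x. f x - g x) \<in> borel_measurable haar2" by measurable
  have i2: "integrable haar2 (\<lambda>x. 2 * (cmod (f x))^2 + 2 * (cmod (g x))^2)"
      using L2_sq[OF assms(1)] L2_sq[OF assms(2)] by auto
  have m2: "(\<lambda>x. (cmod (f x - g x))^2) \<in> borel_measurable haar2" by measurable
  have ae: "AE x in haar2. norm ((cmod (f x - g x))^2) \<le> norm (2 * (cmod (f x))^2 + 2 * (cmod (g x))^2)"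
      using cmod_diff_sq_le by auto
  show "integrable haar2 (\<lambda>x. (cmod (f x - g x))^2)" by (rule Bochner_Integration.integrable_bound[OF i2 m2 ae])
qed

lemma L2_add: assumes "f \<in> L2" "g \<in> L2" shows "(\<lambda>x. f x + g x) \<in> L2"
proof (rule L2_I)
  have [measurable]: "f \<in> borel_measurable haar2" "g \<in> borel_measurable haar2" using assms L2_meas by auto
  show "(\<lambda>x. f x + g x) \<in> borel_measurable haar2" by measurable
  have i2: "integrable haar2 (\<lambda>x. 2 * (cmod (f x))^2 + 2 * (cmod (g x))^2)"
      using L2_sq[OF assms(1)] L2_sq[OF assms(2)] by auto
  have m2: "(\<lambda>x. (cmod (f x + g x))^2) \<in> borel_measurable haar2" by measurable
  have ae: "AE x in haar2. norm ((cmod (f x + g x))^2) \<le> norm (2 * (cmod (f x))^2 + 2 * (cmod (g x))^2)"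
      using cmod_add_sq_le by auto
  show "integrable haar2 (\<lambda>x. (cmod (f x + g x))^2)" by (rule Bochner_Integration.integrable_bound[OF i2 m2 ae])
qed

lemma cmod_sq_Re: "(cmod z)^2 = Re (z * cnj z)"
  by (metis Re_complex_of_real complex_norm_square)

lemma Dn_L2: assumes "Dn n g" shows "g \<in> L2"
proof (rule L2_I)
  show "g \<in> borel_measurable haar2" by (rule Dn_measurable[OF assms])
  have "integrable haar2 (\<lambda>x. Re (g x * cnj (g x)))"
    by (rule integrable_Re[OF Dn_integrable(1)[OF Dn_mult[OF assms Dn_cnj[OF assms]]]])
  then show "integrable haar2 (\<lambda>x. (cmod (g x))^2)" by (simp only: cmod_sq_Re)
qed

lemma E_integrable: "integrable haar2 (E n f)" by (rule Dn_integrable(1)[OF Dn_E])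

lemma E_diff: assumes "integrable haar2 f" "integrable haar2 g"
  shows "E n (\<lambda>x. f x - g x) = (\<lambda>x. E n f x - E n g x)"
proof
  fix x
  have "integral\<^sup>L haar2 (\<lambda>y. ind n (trunc2 x n) y * (f y - g y)) =
    integral\<^sup>L haar2 (\<lambda>y. ind n (trunc2 x n) y * f y - ind n (trunc2 x n) y * g y)"
    by (simp add: right_diff_distrib)
  also have "\<dots> = integral\<^sup>L haar2 (\<lambda>y. ind n (trunc2 x n) y * f y) - integral\<^sup>L haar2 (\<lambda>y. ind n (trunc2 x n) y * g y)"
    by (rule Bochner_Integration.integral_diff) (auto intro!: integrable_ind assms)
  finally show "E n (\<lambda>x. f x - g x) x = E n f x - E n g x"
    by (simp add: E_def right_diff_distrib)
qed

lemma E_orth': assumes "integrable haar2 f" "Dn n h"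
  shows "integral\<^sup>L haar2 (\<lambda>x. (f x - E n f x) * h x) = 0"
  using E_orth[OF assms] by (simp add: mult.commute)

lemma E_E: assumes f: "integrable haar2 f" and nm: "n \<le> m" shows "E n (E m f) = E n f"
proof
  fix x
  let ?k = "trunc2 x n"
  have "Dn m (ind n ?k)" by (rule Dn_ind[OF nm])
  from E_orth[OF f this]
  have "integral\<^sup>L haar2 (\<lambda>y. ind n ?k y * f y - ind n ?k y * E m f y) = 0"
    by (simp add: right_diff_distrib)
  then have "integral\<^sup>L haar2 (\<lambda>y. ind n ?k y * f y) - integral\<^sup>L haar2 (\<lambda>y. ind n ?k y * E m f y) = 0"
    by (subst (asm) Bochner_Integration.integral_diff) (auto intro!: integrable_ind f E_integrable)
  then show "E n (E m f) x = E n f x" by (simp add: E_def)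
qed

lemma E_Dn_mono: "Dn n g \<Longrightarrow> n \<le> m \<Longrightarrow> E m g = g"
  by (rule E_Dn[OF Dn_mono])

lemma pyth_point: "(cmod a)^2 = (cmod (a - b))^2 + (cmod b)^2 + 2 * Re ((a - b) * cnj b)"
  unfolding cmod_power2 by (simp add: algebra_simps power2_eq_square)

definition N :: "(Z2 \<Rightarrow> complex) \<Rightarrow> real" where
  "N u = integral\<^sup>L haar2 (\<lambda>x. (cmod (u x))^2)"

lemma N_nonneg: "N u \<ge> 0" unfolding N_def by (rule integral_nonneg_AE) auto

lemma L2norm_sq: "(L2norm u)^2 = N u"
  unfolding L2norm_def N_def[symmetric] using N_nonneg by simp

lemma pyth: assumes f: "f \<in> L2"
  shows "N f = N (\<lambda>x. f x - E n f x) + N (E n f)"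
proof -
  have fi: "integrable haar2 f" by (rule L2_integrable[OF f])
  have EL2: "E n f \<in> L2" by (rule Dn_L2[OF Dn_E])
  have dL2: "(\<lambda>x. f x - E n f x) \<in> L2" by (rule L2_diff[OF f EL2])
  have ic: "integrable haar2 (\<lambda>x. (f x - E n f x) * cnj (E n f x))"
  proof -
    have "integrable haar2 (\<lambda>x. cnj (E n f x) * (f x - E n f x))"
      by (rule Dn_integrable_mult(1)[OF Dn_cnj[OF Dn_E]]) (auto intro!: fi E_integrable)
    then show ?thesis by (simp add: mult.commute)
  qed
  have icr: "integrable haar2 (\<lambda>x. 2 * Re ((f x - E n f x) * cnj (E n f x)))"
    by (rule integrable_mult_right[OF integrable_Re[OF ic]])
  have z: "integral\<^sup>L haar2 (\<lambda>x. (f x - E n f x) * cnj (E n f x)) = 0"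
    by (rule E_orth'[OF fi Dn_cnj[OF Dn_E]])
  have "N f = integral\<^sup>L haar2 (\<lambda>x. ((cmod (f x - E n f x))^2 + (cmod (E n f x))^2) + 2 * Re ((f x - E n f x) * cnj (E n f x)))"
    unfolding N_def by (intro Bochner_Integration.integral_cong refl pyth_point)
  also have "\<dots> = integral\<^sup>L haar2 (\<lambda>x. (cmod (f x - E n f x))^2 + (cmod (E n f x))^2) + integral\<^sup>L haar2 (\<lambda>x. 2 * Re ((f x - E n f x) * cnj (E n f x)))"
    by (rule Bochner_Integration.integral_add[OF _ icr]) (auto intro!: L2_sq dL2 EL2)
  also have "integral\<^sup>L haar2 (\<lambda>x. 2 * Re ((f x - E n f x) * cnj (E n f x))) = 0"
  proof -
    have "integral\<^sup>L haar2 (\<lambda>x. Re ((f x - E n f x) * cnj (E n f x))) = Re (integral\<^sup>L haar2 (\<lambda>x. (f x - E n f x) * cnj (E n f x)))"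
      by (rule integral_Re[OF ic])
    then show ?thesis using z by (simp only: integral_mult_right_zero) simp
  qed
  also have "integral\<^sup>L haar2 (\<lambda>x. (cmod (f x - E n f x))^2 + (cmod (E n f x))^2) = N (\<lambda>x. f x - E n f x) + N (E n f)"
    unfolding N_def by (rule Bochner_Integration.integral_add) (auto intro!: L2_sq dL2 EL2)
  finally show ?thesis by simp
qed

lemma N_E_le: "f \<in> L2 \<Longrightarrow> N (\<lambda>x. f x - E n f x) \<le> N f" "f \<in> L2 \<Longrightarrow> N (E n f) \<le> N f"
  using pyth[of f n] N_nonneg[of "E n f"] N_nonneg[of "\<lambda>x. f x - E n f x"] by linarith+

lemma N_diff_le: assumes "f \<in> L2" "g \<in> L2"
  shows "N (\<lambda>x. f x + g x) \<le> 2 * N f + 2 * N g"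
proof -
  have "N (\<lambda>x. f x + g x) \<le> integral\<^sup>L haar2 (\<lambda>x. 2 * (cmod (f x))^2 + 2 * (cmod (g x))^2)"
    unfolding N_def by (rule integral_mono) (auto intro!: L2_sq L2_add assms cmod_add_sq_le)
  also have "\<dots> = 2 * N f + 2 * N g" unfolding N_def
    using L2_sq[OF assms(1)] L2_sq[OF assms(2)] by simp
  finally show ?thesis .
qed

lemma ind_eq_gen: assumes "0 \<le> k" "k < 2^n"
  shows "ind n k = (\<lambda>x. if trunc2 x n = k mod 2^n then 1 else 0)"
  using assms by (auto simp: indicator_def cyl_def)

lemma ind_Vgens: assumes "0 \<le> k" "k < 2^n" shows "ind n k \<in> Vgens n"
proof -
  have "(\<lambda>x. if trunc2 x n = k mod 2^n then 1 else 0) \<in> Vgens n" unfolding Vgens_def by blast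
  then show ?thesis using ind_eq_gen[OF assms] by simp
qed

lemma Vgens_Dn: assumes "h \<in> Vgens n" shows "Dn n h"
proof -
  { fix j :: nat and k :: int assume j: "j \<le> n"
    have "Dn n (\<lambda>x. if trunc2 x j = k mod 2^j then 1 else 0)"
    proof (rule DnI)
      fix x y assume "trunc2 x n = trunc2 y n"
      then have "trunc2 x j = trunc2 y j" using trunc2_mono_eq j by blast
      then show "(if trunc2 x j = k mod 2^j then 1 else 0 :: complex) = (if trunc2 y j = k mod 2^j then 1 else 0)" by simp
    qed }
  then show ?thesis using assms unfolding Vgens_def by auto
qed

lemma V_Dn: assumes "g \<in> V n" shows "Dn n g"
proof -
  obtain S c where "finite S" "S \<subseteq> Vgens n" "g = (\<lambda>x. \<Sum>h\<in>S. c h * h x)"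
    using assms unfolding V_def by blast
  then show ?thesis using Dn_sum[of S n c] Vgens_Dn by blast
qed

lemma Vgens_V: assumes "h \<in> Vgens n" shows "h \<in> V n"
  unfolding V_def using assms by (intro CollectI exI[of _ "{h}"] exI[of _ "\<lambda>_. 1"]) auto

lemma ind_inj: "inj_on (ind n) {0..<2^n}"
proof (rule inj_onI)
  fix k k' assume k: "k \<in> {0..<2^n}" and k': "k' \<in> {0..<2^n}" and eq: "ind n k = ind n k'"
  have "ind n k (wit k) = 1" using k by (simp add: cyl_def trunc2_wit)
  then have "ind n k' (wit k) = 1" using eq by simp
  then have "trunc2 (wit k) n = k'" by (auto simp: cyl_def indicator_def split: if_splits)
  then show "k = k'" using k by (simp add: trunc2_wit)
qed

lemma E_V: "E n f \<in> V n"
proof -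
  define c where "c = (\<lambda>h::Z2\<Rightarrow>complex. E n f (SOME x. h x = 1))"
  have ck: "c (ind n k) = E n f (wit k)" if "k \<in> {0..<2^n}" for k
  proof -
    have ex: "\<exists>x. ind n k x = 1" using that by (intro exI[of _ "wit k"]) (simp add: cyl_def trunc2_wit)
    have "ind n k (SOME x. ind n k x = 1) = 1" using someI_ex[OF ex] .
    then have "(SOME x. ind n k x = 1) \<in> cyl n k" by (auto simp: indicator_def split: if_splits)
    then show ?thesis unfolding c_def by (rule Dn_wit[OF Dn_E])
  qed
  have "E n f = (\<lambda>x. \<Sum>h\<in>ind n ` {0..<2^n}. c h * h x)"
  proof
    fix x
    have "(\<Sum>h\<in>ind n ` {0..<2^n}. c h * h x) = (\<Sum>k\<in>{0..<2^n}. c (ind n k) * ind n k x)"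
      by (rule sum.reindex[OF ind_inj, unfolded comp_def])
    also have "\<dots> = (\<Sum>k\<in>{0..<2^n}. E n f (wit k) * ind n k x)"
      by (intro sum.cong refl) (simp add: ck)
    also have "\<dots> = E n f x" by (rule Dn_repr[OF Dn_E, symmetric])
    finally show "E n f x = (\<Sum>h\<in>ind n ` {0..<2^n}. c h * h x)" by simp
  qed
  moreover have "ind n ` {0..<2^n} \<subseteq> Vgens n" using ind_Vgens by auto
  ultimately show ?thesis unfolding V_def by blast
qed

lemma P_E: assumes f: "integrable haar2 f" shows "P n f = E n f"
  unfolding P_def
proof (rule someI2[where a="E n f"])
  show "E n f \<in> V n \<and> (\<forall>h\<in>V n. integral\<^sup>L haar2 (\<lambda>x. (f x - E n f x) * cnj (h x)) = 0)"
    using E_V E_orth'[OF f Dn_cnj[OF V_Dn]] by blast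
next
  fix g assume g: "g \<in> V n \<and> (\<forall>h\<in>V n. integral\<^sup>L haar2 (\<lambda>x. (f x - g x) * cnj (h x)) = 0)"
  have gD: "Dn n g" using g V_Dn by blast
  have dD: "Dn n (\<lambda>x. E n f x - g x)" by (rule Dn_diff[OF Dn_E gD])
  have vals: "E n f (wit k) = g (wit k)" if k: "k \<in> {0..<2^n}" for k
  proof -
    have hV: "ind n k \<in> V n" using k by (intro Vgens_V ind_Vgens) auto
    have c: "cnj (ind n k x) = ind n k x" for x by (simp add: indicator_def)
    have z1: "integral\<^sup>L haar2 (\<lambda>x. (f x - g x) * ind n k x) = 0"
    proof -
      have "integral\<^sup>L haar2 (\<lambda>x. (f x - g x) * cnj (ind n k x)) = 0" using g hV by blast
      then show ?thesis by (simp only: c)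
    qed
    have z2: "integral\<^sup>L haar2 (\<lambda>x. (f x - E n f x) * ind n k x) = 0"
      by (rule E_orth'[OF f Dn_ind]) simp
    have i1: "integrable haar2 (\<lambda>x. (f x - g x) * ind n k x)"
      using integrable_ind[of "\<lambda>x. f x - g x" n k] f Dn_integrable(1)[OF gD] by (simp add: mult.commute)
    have i2: "integrable haar2 (\<lambda>x. (f x - E n f x) * ind n k x)"
      using integrable_ind[of "\<lambda>x. f x - E n f x" n k] f E_integrable by (simp add: mult.commute)
    have "(\<lambda>x. (E n f x - g x) * ind n k x) = (\<lambda>x. (f x - g x) * ind n k x - (f x - E n f x) * ind n k x)"
      by (simp add: algebra_simps)
    then have "integral\<^sup>L haar2 (\<lambda>x. (E n f x - g x) * ind n k x) = 0"
      using Bochner_Integration.integral_diff[OF i1 i2] z1 z2 by simp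
    moreover have "integral\<^sup>L haar2 (\<lambda>x. (E n f x - g x) * ind n k x) =
        (\<Sum>k'\<in>{0..<2^n}. (E n f (wit k') - g (wit k')) * ind n k (wit k')) / 2^n"
      by (rule Dn_integrable(2)[OF Dn_mult[OF dD Dn_ind]]) simp
    moreover have "(\<Sum>k'\<in>{0..<2^n}. (E n f (wit k') - g (wit k')) * ind n k (wit k')) = E n f (wit k) - g (wit k)"
      using k by (subst sum.cong[where h="\<lambda>k'. if k' = k then E n f (wit k') - g (wit k') else 0"])
        (auto simp: indicator_def cyl_def trunc2_wit)
    ultimately show ?thesis by simp
  qed
  show "g = E n f"
  proof
    fix x
    have "x \<in> cyl n (trunc2 x n)" by (simp add: cyl_def)
    moreover have "trunc2 x n \<in> {0..<2^n}" using trunc2_range by auto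
    ultimately show "g x = E n f x"
      using vals Dn_wit[OF gD] Dn_wit[OF Dn_E] by metis
  qed
qed

lemma dexp_int: assumes "q \<in> Lam" shows "q * 2^(dexp q) \<in> \<int>"
proof -
  from assms obtain m :: nat where "q * 2^m \<in> \<int>" by (auto simp: Lam_def)
  then show ?thesis unfolding dexp_def by (rule LeastI)
qed

lemma dexp_le: "q * 2^m \<in> \<int> \<Longrightarrow> dexp q \<le> m"
  unfolding dexp_def by (rule Least_le)

lemma dexp_0[simp]: "dexp 0 = 0"
  using dexp_le[of 0 0] by simp

lemma dexp_pos: assumes "q \<in> Lam" "q \<noteq> 0" shows "dexp q \<ge> 1"
proof (rule ccontr)
  assume "\<not> dexp q \<ge> 1"
  then have "dexp q = 0" by simp
  with dexp_int[OF assms(1)] have "q \<in> \<int>" by simp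
  then obtain z where "q = of_int z" by (auto elim: Ints_cases)
  moreover have "0 \<le> q" "q < 1" using assms(1) by (auto simp: Lam_def)
  ultimately have "z = 0" by simp
  then show False using \<open>q = of_int z\<close> assms(2) by simp
qed

lemma abs2_nz: "q \<noteq> 0 \<Longrightarrow> abs2 q = 2 ^ dexp q" by (simp add: abs2_def)

lemma trunc2_dvd: assumes "d \<le> M" shows "(2::int)^d dvd (trunc2 x M - trunc2 x d)"
  using assms
proof (induction M rule: dec_induct)
  case base then show ?case by simp
next
  case (step M)
  have "trunc2 x (Suc M) - trunc2 x d = (trunc2 x M - trunc2 x d) + (if x M then 2^M else 0)"
    by (simp add: trunc2_Suc)
  moreover have "(2::int)^d dvd (if x M then 2^M else 0)" using step(1) by (simp add: le_imp_power_dvd)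
  ultimately show ?case using step.IH by (metis dvd_add)
qed

lemma cis_int_period: "cis (2 * pi * real_of_int z) = 1"
  by (rule cis_multiple_2pi) simp

lemma chr_Dn: "dexp q \<le> m \<Longrightarrow> Dn m (chr q)"
  by (rule Dn_mono[of "dexp q"]) (auto intro!: DnI simp: chr_def)

lemma chr_at: assumes q: "q \<in> Lam" and M: "dexp q \<le> M"
  shows "chr q x = cis (- 2 * pi * real_of_rat q * real_of_int (trunc2 x M))"
proof -
  let ?d = "dexp q"
  obtain a where a: "q * 2^?d = of_int a" using dexp_int[OF q] by (auto elim: Ints_cases)
  obtain j where j: "trunc2 x M - trunc2 x ?d = 2^?d * j" using trunc2_dvd[OF M, of x] by (auto elim: dvdE)
  have ra: "real_of_rat q * 2^?d = real_of_int a"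
    using arg_cong[OF a, of real_of_rat] by (simp add: of_rat_mult of_rat_power)
  have "- 2 * pi * real_of_rat q * real_of_int (trunc2 x M) =
     - 2 * pi * real_of_rat q * real_of_int (trunc2 x ?d) + (- 2 * pi * (real_of_rat q * 2^?d) * real_of_int j)"
    using arg_cong[OF j, of real_of_int] by (simp add: algebra_simps)
  also have "\<dots> = - 2 * pi * real_of_rat q * real_of_int (trunc2 x ?d) + 2 * pi * real_of_int (- a * j)"
    unfolding ra by simp
  finally have "cis (- 2 * pi * real_of_rat q * real_of_int (trunc2 x M)) =
     cis (- 2 * pi * real_of_rat q * real_of_int (trunc2 x ?d)) * cis (2 * pi * real_of_int (- a * j))"
    by (simp add: cis_mult)
  then show ?thesis using cis_int_period[of "- a * j"] by (simp add: chr_def)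
qed

lemma chr_wit: assumes "q \<in> Lam" "dexp q \<le> M" "0 \<le> t" "t < 2^M"
  shows "chr q (wit t) = cis (- 2 * pi * real_of_rat q * real_of_int t)"
  using chr_at[OF assms(1,2)] trunc2_wit[OF assms(3,4)] by simp

lemma chr_integrable: "integrable haar2 (chr q)"
  by (rule Dn_integrable(1)[OF chr_Dn[OF order_refl]])

lemma fourier_integrable: "integrable haar2 g \<Longrightarrow> integrable haar2 (\<lambda>x. chr q x * g x)"
  by (rule Dn_integrable_mult(1)[OF chr_Dn[OF order_refl]])

lemma fourier_diff: assumes "integrable haar2 g" "integrable haar2 h"
  shows "fourier (\<lambda>x. g x - h x) q = fourier g q - fourier h q"
proof -
  have "fourier (\<lambda>x. g x - h x) q = integral\<^sup>L haar2 (\<lambda>x. chr q x * g x - chr q x * h x)"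
    unfolding fourier_def by (simp add: right_diff_distrib)
  also have "\<dots> = fourier g q - fourier h q" unfolding fourier_def
    by (rule Bochner_Integration.integral_diff) (auto intro!: fourier_integrable assms)
  finally show ?thesis .
qed

lemma ind_integral_Dn: assumes "Dn m h" "0 \<le> t" "t < 2^m"
  shows "integral\<^sup>L haar2 (\<lambda>x. ind m t x * h x) = h (wit t) / 2^m"
  using E_wit[OF assms(2,3), of h] E_Dn[OF assms(1)] by (simp add: field_simps)

lemma ind_split: assumes "0 \<le> k" "k < 2^n"
  shows "ind n k x = ind (Suc n) k x + ind (Suc n) (k + 2^n) x"
proof -
  have r: "0 \<le> trunc2 x n" "trunc2 x n < 2^n" using trunc2_range by auto
  show ?thesis using assms r by (auto simp: indicator_def cyl_def trunc2_Suc)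
qed

lemma E_chr_top: assumes q: "q \<in> Lam" and d: "dexp q = Suc n"
  shows "E n (chr q) = (\<lambda>x. 0)"
proof
  fix x
  let ?k = "trunc2 x n"
  have k: "0 \<le> ?k" "?k < 2^n" using trunc2_range by auto
  have D: "Dn (Suc n) (chr q)" using chr_Dn d by simp
  have "integral\<^sup>L haar2 (\<lambda>y. ind n ?k y * chr q y) =
      integral\<^sup>L haar2 (\<lambda>y. ind (Suc n) ?k y * chr q y + ind (Suc n) (?k + 2^n) y * chr q y)"
    by (intro Bochner_Integration.integral_cong refl) (simp add: ind_split[OF k] distrib_right)
  also have "\<dots> = integral\<^sup>L haar2 (\<lambda>y. ind (Suc n) ?k y * chr q y) + integral\<^sup>L haar2 (\<lambda>y. ind (Suc n) (?k + 2^n) y * chr q y)"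
    by (rule Bochner_Integration.integral_add) (auto intro!: integrable_ind chr_integrable)
  also have "\<dots> = (chr q (wit ?k) + chr q (wit (?k + 2^n))) / 2^Suc n"
    using k by (simp add: ind_integral_Dn[OF D] add_divide_distrib)
  also have "chr q (wit (?k + 2^n)) = - chr q (wit ?k)"
  proof -
    obtain a where a: "q * 2^Suc n = of_int a" using dexp_int[OF q] d by (auto elim: Ints_cases)
    have "odd a"
    proof
      assume "even a"
      then obtain b where "a = 2 * b" by auto
      then have "q * 2^n = of_int b" using a by (simp add: power_Suc)
      then have "dexp q \<le> n" by (intro dexp_le) simp
      then show False using d by simp
    qed
    then obtain b where b: "a = 2 * b + 1" by (auto elim: oddE)
    have ra: "real_of_rat q * 2^n = real_of_int a / 2"
      using arg_cong[OF a, of real_of_rat] by (simp add: of_rat_mult of_rat_power power_Suc field_simps)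
    have "chr q (wit (?k + 2^n)) = cis (- 2 * pi * real_of_rat q * real_of_int ?k + (- 2 * pi * (real_of_rat q * 2^n)))"
      using k by (subst chr_wit[OF q, of "Suc n"]) (auto simp: d algebra_simps)
    also have "- 2 * pi * real_of_rat q * real_of_int ?k + (- 2 * pi * (real_of_rat q * 2^n)) =
        - 2 * pi * real_of_rat q * real_of_int ?k + 2 * pi * real_of_int (- b - 1) + pi"
      unfolding ra b by (simp add: field_simps)
    also have "cis (- 2 * pi * real_of_rat q * real_of_int ?k + 2 * pi * real_of_int (- b - 1) + pi) =
        cis (- 2 * pi * real_of_rat q * real_of_int ?k) * cis (2 * pi * real_of_int (- b - 1)) * cis pi"
      by (simp only: cis_mult)
    also have "\<dots> = - cis (- 2 * pi * real_of_rat q * real_of_int ?k)"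
      by (simp only: cis_int_period cis_pi) simp
    also have "cis (- 2 * pi * real_of_rat q * real_of_int ?k) = chr q (wit ?k)"
      using k by (subst chr_wit[OF q, of "Suc n"]) (auto simp: d)
    finally show ?thesis by simp
  qed
  finally show "E n (chr q) x = 0" by (simp add: E_def)
qed

lemma E_zero: "E n (\<lambda>x. 0) = (\<lambda>x. 0)"
  by (rule ext) (simp add: E_def)

lemma fourier_vanish: assumes g: "Dn M g" and q: "q \<in> Lam" and d: "dexp q > M"
  shows "fourier g q = 0"
proof -
  obtain n where n: "dexp q = Suc n" using d by (cases "dexp q") auto
  have Mn: "M \<le> n" using d n by simp
  have "E M (chr q) = E M (E n (chr q))" by (rule E_E[OF chr_integrable Mn, symmetric])
  also have "\<dots> = (\<lambda>x. 0)" using E_chr_top[OF q n] E_zero by simp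
  finally have EM: "E M (chr q) = (\<lambda>x. 0)" .
  have "integral\<^sup>L haar2 (\<lambda>x. (chr q x - E M (chr q) x) * g x) = 0"
    by (rule E_orth'[OF chr_integrable g])
  then show ?thesis unfolding fourier_def EM by simp
qed

lemma fourier_E_low: assumes g: "integrable haar2 g" and d: "dexp q \<le> n"
  shows "fourier (E n g) q = fourier g q"
proof -
  have "integral\<^sup>L haar2 (\<lambda>x. chr q x * (g x - E n g x)) = 0"
    by (rule E_orth[OF g chr_Dn[OF d]])
  then have "integral\<^sup>L haar2 (\<lambda>x. chr q x * g x - chr q x * E n g x) = 0"
    by (simp add: right_diff_distrib)
  then show ?thesis unfolding fourier_def
    by (subst (asm) Bochner_Integration.integral_diff) (auto intro!: fourier_integrable g E_integrable)
qed

lemma fourier_E_high: "q \<in> Lam \<Longrightarrow> dexp q > n \<Longrightarrow> fourier (E n g) q = 0"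
  by (rule fourier_vanish[OF Dn_E])

lemma cis_eq_1_int: assumes "cis x = 1" shows "\<exists>n::int. x = of_int n * 2 * pi"
proof -
  have "cos x = 1" using arg_cong[OF assms, of Re] by simp
  then show ?thesis using cos_one_2pi_int by blast
qed

lemma root_sum:
  fixes N :: nat and d :: int
  assumes N: "N > 0" and d: "\<bar>d\<bar> < int N"
  shows "(\<Sum>a<N. cis (2 * pi * real a * real_of_int d / real N)) = (if d = 0 then of_nat N else 0)"
proof (cases "d = 0")
  case True then show ?thesis by simp
next
  case False
  define z where "z = cis (2 * pi * real_of_int d / real N)"
  have za: "cis (2 * pi * real a * real_of_int d / real N) = z ^ a" for a
    unfolding z_def by (subst Complex.DeMoivre) (simp add: algebra_simps)
  have z1: "z \<noteq> 1"
  proof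
    assume "z = 1"
    then obtain n :: int where n: "2 * pi * real_of_int d / real N = of_int n * 2 * pi"
      using cis_eq_1_int unfolding z_def by blast
    then have "real_of_int d = real_of_int n * real N" using N by (simp add: field_simps)
    then have dn: "d = n * int N" by (metis of_int_eq_iff of_int_mult of_int_of_nat_eq)
    have "n \<noteq> 0" using dn False by auto
    then have "1 \<le> \<bar>n\<bar>" by (auto simp: abs_if)
    then have "1 * int N \<le> \<bar>n\<bar> * int N" by (rule mult_right_mono) simp
    then have "\<bar>d\<bar> \<ge> int N" unfolding dn abs_mult by simp
    then show False using d by simp
  qed
  have zN: "z ^ N = 1" unfolding z_def Complex.DeMoivre using N
  proof -
    have "real N * (2 * pi * real_of_int d / real N) = 2 * pi * real_of_int d" using N by simp
    then show "cis (real N * (2 * pi * real_of_int d / real N)) = 1" by (simp only: cis_int_period)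
  qed
  have "(\<Sum>a<N. cis (2 * pi * real a * real_of_int d / real N)) = (\<Sum>a<N. z ^ a)" using za by simp
  also have "\<dots> = 0" using geometric_sum[OF z1, of N] zN by simp
  finally show ?thesis using False by simp
qed

lemma dft_parseval:
  fixes N :: nat and G :: "int \<Rightarrow> complex"
  assumes N: "N > 0"
  shows "(\<Sum>a<N. (cmod ((\<Sum>t\<in>{0..<int N}. cis (- 2 * pi * (real a / real N) * real_of_int t) * G t) / of_nat N))^2)
      = (\<Sum>t\<in>{0..<int N}. (cmod (G t))^2) / real N"
proof -
  let ?T = "{0..<int N}"
  define w where "w = (\<lambda>a::nat. \<lambda>d::int. cis (2 * pi * real a * real_of_int d / real N))"
  define S where "S = (\<lambda>a. \<Sum>t\<in>?T. cis (- 2 * pi * (real a / real N) * real_of_int t) * G t)"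
  have step1: "S a * cnj (S a) = (\<Sum>t\<in>?T. \<Sum>t'\<in>?T. G t * cnj (G t') * w a (t' - t))" for a
  proof -
    have "S a * cnj (S a) = (\<Sum>t\<in>?T. \<Sum>t'\<in>?T. (cis (- 2 * pi * (real a / real N) * real_of_int t) * G t) *
         cnj (cis (- 2 * pi * (real a / real N) * real_of_int t') * G t'))"
      unfolding S_def cnj_sum by (rule sum_product)
    also have "\<dots> = (\<Sum>t\<in>?T. \<Sum>t'\<in>?T. G t * cnj (G t') * w a (t' - t))"
    proof (intro sum.cong refl)
      fix t t'
      have "cis (- 2 * pi * (real a / real N) * real_of_int t) * cnj (cis (- 2 * pi * (real a / real N) * real_of_int t')) = w a (t' - t)"
        unfolding w_def cis_cnj cis_mult by (simp add: algebra_simps diff_divide_distrib)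
      then show "(cis (- 2 * pi * (real a / real N) * real_of_int t) * G t) *
         cnj (cis (- 2 * pi * (real a / real N) * real_of_int t') * G t') = G t * cnj (G t') * w a (t' - t)"
        by (simp add: algebra_simps)
    qed
    finally show ?thesis .
  qed
  have step3: "(\<Sum>a<N. G t * cnj (G t') * w a (t' - t)) = (if t' = t then G t * cnj (G t) * of_nat N else 0)"
    if "t \<in> ?T" "t' \<in> ?T" for t t'
  proof -
    have "\<bar>t' - t\<bar> < int N" using that by auto
    then have "(\<Sum>a<N. w a (t' - t)) = (if t' - t = 0 then of_nat N else 0)"
      unfolding w_def by (rule root_sum[OF N])
    then show ?thesis by (simp add: sum_distrib_left[symmetric])
  qed
  have "complex_of_real (\<Sum>a<N. (cmod (S a / of_nat N))^2) = (\<Sum>a<N. (S a / of_nat N) * cnj (S a / of_nat N))"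
    by (simp only: of_real_sum complex_norm_square)
  also have "\<dots> = (\<Sum>a<N. S a * cnj (S a)) / (of_nat N)^2"
    by (simp add: power2_eq_square sum_divide_distrib)
  also have "(\<Sum>a<N. S a * cnj (S a)) = (\<Sum>a<N. \<Sum>t\<in>?T. \<Sum>t'\<in>?T. G t * cnj (G t') * w a (t' - t))"
    using step1 by simp
  also have "\<dots> = (\<Sum>t\<in>?T. \<Sum>t'\<in>?T. \<Sum>a<N. G t * cnj (G t') * w a (t' - t))"
    by (simp add: sum.swap[of _ "{..<N}"])
  also have "\<dots> = (\<Sum>t\<in>?T. \<Sum>t'\<in>?T. if t' = t then G t * cnj (G t) * of_nat N else 0)"
    by (intro sum.cong refl step3) auto
  also have "\<dots> = (\<Sum>t\<in>?T. G t * cnj (G t) * of_nat N)"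
    by (intro sum.cong refl) simp
  also have "\<dots> / (of_nat N)^2 = (\<Sum>t\<in>?T. G t * cnj (G t)) / of_nat N"
    using N by (simp add: sum_distrib_right[symmetric] power2_eq_square)
  also have "(\<Sum>t\<in>?T. G t * cnj (G t)) = complex_of_real (\<Sum>t\<in>?T. (cmod (G t))^2)"
    by (simp only: of_real_sum complex_norm_square)
  also have "complex_of_real (\<Sum>t\<in>?T. (cmod (G t))^2) / of_nat N = complex_of_real ((\<Sum>t\<in>?T. (cmod (G t))^2) / real N)"
    by simp
  finally show ?thesis unfolding S_def by (simp only: of_real_eq_iff)
qed

definition rr :: "real \<Rightarrow> real" where "rr s = 2 powr (2 * s)"

lemma rr_nonneg[simp]: "0 \<le> rr s" unfolding rr_def by simp

lemma rr_gt1: "s > 0 \<Longrightarrow> rr s > 1" unfolding rr_def by simp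

lemma rr_pow: "(rr s)^n = 2 powr (2 * real n * s)"
  unfolding rr_def by (simp add: powr_power algebra_simps)

lemma rr_pow2: "((2::real)^d) powr (2 * s) = (rr s)^d"
proof -
  have "((2::real)^d) powr (2 * s) = (2 powr real d) powr (2 * s)" by (simp add: powr_realpow)
  also have "\<dots> = 2 powr (2 * real d * s)" by (simp add: powr_powr algebra_simps)
  finally show ?thesis by (simp add: rr_pow)
qed

lemma csum_le: assumes s: "s > 0"
  shows "(\<Sum>n<L. if n < d then (rr s)^n else 0) \<le> (rr s)^d / (rr s - 1)"
proof -
  let ?r = "rr s"
  have r1: "?r > 1" by (rule rr_gt1[OF s])
  have "(\<Sum>n<L. if n < d then ?r^n else 0) \<le> (\<Sum>n<d. ?r^n)"
  proof -
    have "(\<Sum>n<L. if n < d then ?r^n else 0) = (\<Sum>n\<in>{..<L} \<inter> {..<d}. ?r^n)"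
      by (subst sum.inter_restrict) auto
    also have "\<dots> \<le> (\<Sum>n<d. ?r^n)" by (rule sum_mono2) auto
    finally show ?thesis .
  qed
  also have "\<dots> = (?r^d - 1) / (?r - 1)" using r1 by (intro geometric_sum) simp
  also have "\<dots> \<le> ?r^d / (?r - 1)" using r1 by (intro divide_right_mono) auto
  finally show ?thesis .
qed

lemma w_bound1: assumes s: "s > 0" and q: "q \<in> Lam"
  shows "(\<Sum>n<L. if n < dexp q then (rr s)^n else 0) \<le> (1 + abs2 q) powr (2 * s) / (rr s - 1)"
proof (cases "q = 0")
  case True
  have "rr s - 1 > 0" using rr_gt1[OF s] by simp
  then show ?thesis using True by simp
next
  case False
  have r1: "rr s - 1 > 0" using rr_gt1[OF s] by simp
  have "(rr s)^(dexp q) = ((2::real)^dexp q) powr (2 * s)" by (simp add: rr_pow2)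
  also have "\<dots> \<le> (1 + abs2 q) powr (2 * s)" using False s by (intro powr_mono2) (auto simp: abs2_nz)
  finally have "(rr s)^(dexp q) / (rr s - 1) \<le> (1 + abs2 q) powr (2 * s) / (rr s - 1)"
    using r1 by (intro divide_right_mono) auto
  then show ?thesis using csum_le[OF s, where L=L and d="dexp q"] by linarith
qed

lemma w_bound2: assumes s: "s > 0" and q: "q \<in> Lam" "q \<noteq> 0" and M: "dexp q \<le> M"
  shows "(1 + abs2 q) powr (2 * s) \<le> (rr s)^2 * (\<Sum>n<M. if n < dexp q then (rr s)^n else 0)"
proof -
  let ?r = "rr s" and ?d = "dexp q"
  have d1: "?d \<ge> 1" by (rule dexp_pos[OF q])
  have r1: "?r > 1" by (rule rr_gt1[OF s])
  have "(1 + abs2 q) powr (2 * s) \<le> ((2::real)^(Suc ?d)) powr (2 * s)"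
    using s q by (intro powr_mono2) (auto simp: abs2_nz)
  also have "\<dots> = ?r^(Suc ?d)" by (rule rr_pow2)
  also have "\<dots> = ?r^2 * ?r^(?d - 1)" using d1 by (simp add: power_add[symmetric])
  also have "?r^(?d - 1) \<le> (\<Sum>n<M. if n < ?d then ?r^n else 0)"
  proof -
    have "?r^(?d - 1) = (if ?d - 1 < ?d then ?r^(?d - 1) else 0)" using d1 by simp
    also have "\<dots> \<le> (\<Sum>n<M. if n < ?d then ?r^n else 0)"
      using d1 M r1 by (intro member_le_sum) auto
    finally show ?thesis .
  qed
  then have "?r^2 * ?r^(?d - 1) \<le> ?r^2 * (\<Sum>n<M. if n < ?d then ?r^n else 0)"
    by (intro mult_left_mono) auto
  finally show ?thesis .
qed

definition LamM :: "nat \<Rightarrow> rat set" where "LamM M = {q \<in> Lam. dexp q \<le> M}"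
definition rho :: "nat \<Rightarrow> nat \<Rightarrow> rat" where "rho M a = of_nat a / 2^M"

lemma rho_LamM: assumes "a < 2^M" shows "rho M a \<in> LamM M"
proof -
  have a: "of_nat a < (2::rat)^M" using assms by (metis of_nat_less_iff of_nat_numeral of_nat_power)
  have i: "rho M a * 2^M \<in> \<int>" by (simp add: rho_def)
  have "rho M a \<in> Lam" unfolding Lam_def using a i by (auto simp: rho_def intro!: exI[of _ M])
  moreover have "dexp (rho M a) \<le> M" by (rule dexp_le[OF i])
  ultimately show ?thesis by (simp add: LamM_def)
qed

lemma LamM_rho: assumes "q \<in> LamM M" shows "\<exists>a<2^M. q = rho M a"
proof -
  have q: "q \<in> Lam" and d: "dexp q \<le> M" using assms by (auto simp: LamM_def)
  have e: "q * 2^M = (q * 2^dexp q) * 2^(M - dexp q)" using d by (simp add: power_add[symmetric])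
  have "(2::rat)^(M - dexp q) \<in> \<int>" by (intro Ints_power) simp
  from Ints_mult[OF dexp_int[OF q] this] have "q * 2^M \<in> \<int>" unfolding e .
  then obtain z where z: "q * 2^M = of_int z" by (auto elim: Ints_cases)
  have q01: "0 \<le> q" "q < 1" using q by (auto simp: Lam_def)
  have "0 \<le> (of_int z :: rat)" "(of_int z :: rat) < 2^M" unfolding z[symmetric] using q01 by auto
  then have z0: "0 \<le> z" and "(of_int z :: rat) < of_int (2^M)" by simp_all
  then have z1: "z < 2^M" by (simp only: of_int_less_iff)
  define a where "a = nat z"
  have "a < 2^M" using z0 z1 by (simp add: a_def nat_less_iff)
  moreover have "q = rho M a" using z z0 by (simp add: rho_def a_def field_simps)
  ultimately show ?thesis by blast
qed

lemma LamM_eq: "LamM M = rho M ` {..<2^M}"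
  using rho_LamM LamM_rho by blast

lemma rho_inj: "inj_on (rho M) {..<2^M}"
  by (rule inj_onI) (simp add: rho_def)

lemma finite_LamM: "finite (LamM M)" by (simp add: LamM_eq)

lemma real_rho: "real_of_rat (rho M a) = real a / 2^M"
  by (simp add: rho_def of_rat_divide of_rat_power)

lemma fourier_Dn: assumes g: "Dn M g" and a: "a < 2^M"
  shows "fourier g (rho M a) = (\<Sum>t\<in>{0..<2^M}. cis (- 2 * pi * (real a / 2^M) * real_of_int t) * g (wit t)) / 2^M"
proof -
  have q: "rho M a \<in> Lam" "dexp (rho M a) \<le> M" using rho_LamM[OF a] by (auto simp: LamM_def)
  have "fourier g (rho M a) = (\<Sum>t\<in>{0..<2^M}. chr (rho M a) (wit t) * g (wit t)) / 2^M"
    unfolding fourier_def by (rule Dn_integrable(2)[OF Dn_mult[OF chr_Dn[OF q(2)] g]])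
  also have "\<dots> = (\<Sum>t\<in>{0..<2^M}. cis (- 2 * pi * (real a / 2^M) * real_of_int t) * g (wit t)) / 2^M"
    by (intro arg_cong2[where f="(/)"] sum.cong refl) (auto simp: chr_wit[OF q] real_rho)
  finally show ?thesis .
qed

lemma N_Dn: assumes g: "Dn M g" shows "N g = (\<Sum>t\<in>{0..<2^M}. (cmod (g (wit t)))^2) / 2^M"
proof -
  have "complex_of_real (N g) = integral\<^sup>L haar2 (\<lambda>x. complex_of_real ((cmod (g x))^2))"
    unfolding N_def by (rule integral_complex_of_real[symmetric])
  also have "\<dots> = integral\<^sup>L haar2 (\<lambda>x. g x * cnj (g x))" by (simp only: complex_norm_square)
  also have "\<dots> = (\<Sum>t\<in>{0..<2^M}. g (wit t) * cnj (g (wit t))) / 2^M"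
    by (rule Dn_integrable(2)[OF Dn_mult[OF g Dn_cnj[OF g]]])
  also have "(\<Sum>t\<in>{0..<2^M}. g (wit t) * cnj (g (wit t))) = complex_of_real (\<Sum>t\<in>{0..<2^M}. (cmod (g (wit t)))^2)"
    by (simp only: of_real_sum complex_norm_square)
  finally have "complex_of_real (N g) = complex_of_real ((\<Sum>t\<in>{0..<2^M}. (cmod (g (wit t)))^2) / 2^M)"
    by simp
  then show ?thesis by (simp only: of_real_eq_iff)
qed

lemma parseval_Dn: assumes g: "Dn M g" shows "N g = (\<Sum>q\<in>LamM M. (cmod (fourier g q))^2)"
proof -
  have "(\<Sum>q\<in>LamM M. (cmod (fourier g q))^2) = (\<Sum>a<2^M. (cmod (fourier g (rho M a)))^2)"
    unfolding LamM_eq by (rule sum.reindex[OF rho_inj, unfolded comp_def])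
  also have "\<dots> = (\<Sum>a<2^M. (cmod ((\<Sum>t\<in>{0..<int (2^M)}. cis (- 2 * pi * (real a / real (2^M)) * real_of_int t) * g (wit t)) / of_nat (2^M)))^2)"
    by (intro sum.cong refl) (simp add: fourier_Dn[OF g])
  also have "\<dots> = (\<Sum>t\<in>{0..<int (2^M)}. (cmod (g (wit t)))^2) / real (2^M)"
    by (rule dft_parseval) simp
  also have "\<dots> = N g" using N_Dn[OF g] by simp
  finally show ?thesis by simp
qed

lemma fourier_vanish_out: "Dn M g \<Longrightarrow> q \<in> Lam \<Longrightarrow> q \<notin> LamM M \<Longrightarrow> fourier g q = 0"
  by (rule fourier_vanish) (auto simp: LamM_def)

lemma N_level: assumes g: "Dn M g"
  shows "N (\<lambda>x. g x - E n g x) = (\<Sum>q\<in>LamM M. if n < dexp q then (cmod (fourier g q))^2 else 0)"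
proof (cases "M \<le> n")
  case True
  have "E n g = g" by (rule E_Dn_mono[OF g True])
  then have "N (\<lambda>x. g x - E n g x) = 0" by (simp add: N_def)
  moreover have "(\<Sum>q\<in>LamM M. if n < dexp q then (cmod (fourier g q))^2 else 0) = 0"
    using True by (intro sum.neutral) (auto simp: LamM_def)
  ultimately show ?thesis by simp
next
  case False
  have u: "Dn M (\<lambda>x. g x - E n g x)" using False by (intro Dn_diff g Dn_mono[OF Dn_E]) simp
  have gi: "integrable haar2 g" by (rule Dn_integrable(1)[OF g])
  have "N (\<lambda>x. g x - E n g x) = (\<Sum>q\<in>LamM M. (cmod (fourier (\<lambda>x. g x - E n g x) q))^2)"
    by (rule parseval_Dn[OF u])
  also have "\<dots> = (\<Sum>q\<in>LamM M. if n < dexp q then (cmod (fourier g q))^2 else 0)"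
  proof (intro sum.cong refl)
    fix q assume q: "q \<in> LamM M"
    have fd: "fourier (\<lambda>x. g x - E n g x) q = fourier g q - fourier (E n g) q"
      by (rule fourier_diff[OF gi E_integrable])
    show "(cmod (fourier (\<lambda>x. g x - E n g x) q))^2 = (if n < dexp q then (cmod (fourier g q))^2 else 0)"
    proof (cases "n < dexp q")
      case True
      then show ?thesis using fd fourier_E_high[of q n g] q by (simp add: LamM_def)
    next
      case False
      then show ?thesis using fd fourier_E_low[OF gi, of q n] by simp
    qed
  qed
  finally show ?thesis .
qed

lemma Hs_norm_Dn: assumes g: "Dn M g"
  shows "(Hs_norm s g)^2 = (\<Sum>q\<in>LamM M. (1 + abs2 q) powr (2 * s) * (cmod (fourier g q))^2)"
proof -
  have "infsum (\<lambda>q. (1 + abs2 q) powr (2 * s) * (cmod (fourier g q))^2) Lam =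
        infsum (\<lambda>q. (1 + abs2 q) powr (2 * s) * (cmod (fourier g q))^2) (LamM M)"
    by (rule infsum_cong_neutral) (auto simp: LamM_def fourier_vanish_out[OF g])
  also have "\<dots> = (\<Sum>q\<in>LamM M. (1 + abs2 q) powr (2 * s) * (cmod (fourier g q))^2)"
    by (rule infsum_finite[OF finite_LamM])
  finally have e: "infsum (\<lambda>q. (1 + abs2 q) powr (2 * s) * (cmod (fourier g q))^2) Lam = (\<Sum>q\<in>LamM M. (1 + abs2 q) powr (2 * s) * (cmod (fourier g q))^2)" .
  have "0 \<le> (\<Sum>q\<in>LamM M. (1 + abs2 q) powr (2 * s) * (cmod (fourier g q))^2)"
    by (intro sum_nonneg mult_nonneg_nonneg) auto
  then show ?thesis unfolding Hs_norm_def e by simp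
qed

lemma ident: assumes g: "Dn M g"
  shows "(\<Sum>n<L. (rr s)^n * N (\<lambda>x. g x - E n g x)) =
    (\<Sum>q\<in>LamM M. (\<Sum>n<L. if n < dexp q then (rr s)^n else 0) * (cmod (fourier g q))^2)"
proof -
  have "(\<Sum>n<L. (rr s)^n * N (\<lambda>x. g x - E n g x)) =
      (\<Sum>n<L. \<Sum>q\<in>LamM M. (if n < dexp q then (rr s)^n else 0) * (cmod (fourier g q))^2)"
  proof (intro sum.cong refl)
    fix n
    show "(rr s)^n * N (\<lambda>x. g x - E n g x) = (\<Sum>q\<in>LamM M. (if n < dexp q then (rr s)^n else 0) * (cmod (fourier g q))^2)"
      unfolding N_level[OF g] sum_distrib_left by (intro sum.cong refl) simp
  qed
  also have "\<dots> = (\<Sum>q\<in>LamM M. \<Sum>n<L. (if n < dexp q then (rr s)^n else 0) * (cmod (fourier g q))^2)"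
    by (rule sum.swap)
  also have "\<dots> = (\<Sum>q\<in>LamM M. (\<Sum>n<L. if n < dexp q then (rr s)^n else 0) * (cmod (fourier g q))^2)"
    by (simp add: sum_distrib_right)
  finally show ?thesis .
qed

lemma ineq1: assumes s: "s > 0" and g: "Dn M g"
  shows "(\<Sum>n<L. (rr s)^n * N (\<lambda>x. g x - E n g x)) \<le> (Hs_norm s g)^2 / (rr s - 1)"
proof -
  have r1: "rr s - 1 > 0" using rr_gt1[OF s] by simp
  have "(\<Sum>n<L. (rr s)^n * N (\<lambda>x. g x - E n g x)) =
    (\<Sum>q\<in>LamM M. (\<Sum>n<L. if n < dexp q then (rr s)^n else 0) * (cmod (fourier g q))^2)"
    by (rule ident[OF g])
  also have "\<dots> \<le> (\<Sum>q\<in>LamM M. ((1 + abs2 q) powr (2 * s) / (rr s - 1)) * (cmod (fourier g q))^2)"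
    by (intro sum_mono mult_right_mono w_bound1[OF s]) (auto simp: LamM_def)
  also have "\<dots> = (\<Sum>q\<in>LamM M. (1 + abs2 q) powr (2 * s) * (cmod (fourier g q))^2) / (rr s - 1)"
    by (simp add: sum_divide_distrib)
  also have "\<dots> = (Hs_norm s g)^2 / (rr s - 1)" by (simp add: Hs_norm_Dn[OF g])
  finally show ?thesis .
qed

lemma chr_0: "chr 0 x = 1" by (simp add: chr_def)

lemma fourier_0: "fourier g 0 = integral\<^sup>L haar2 g"
  by (simp add: fourier_def chr_0)

lemma ineq2: assumes s: "s > 0" and g: "Dn M g" and z: "fourier g 0 = 0"
  shows "(Hs_norm s g)^2 \<le> (rr s)^2 * (\<Sum>n<M. (rr s)^n * N (\<lambda>x. g x - E n g x))"
proof -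
  have "(Hs_norm s g)^2 = (\<Sum>q\<in>LamM M. (1 + abs2 q) powr (2 * s) * (cmod (fourier g q))^2)"
    by (rule Hs_norm_Dn[OF g])
  also have "\<dots> \<le> (\<Sum>q\<in>LamM M. ((rr s)^2 * (\<Sum>n<M. if n < dexp q then (rr s)^n else 0)) * (cmod (fourier g q))^2)"
  proof (intro sum_mono)
    fix q assume q: "q \<in> LamM M"
    show "(1 + abs2 q) powr (2 * s) * (cmod (fourier g q))^2 \<le> ((rr s)^2 * (\<Sum>n<M. if n < dexp q then (rr s)^n else 0)) * (cmod (fourier g q))^2"
    proof (cases "q = 0")
      case True then show ?thesis using z by simp
    next
      case False
      then show ?thesis using q by (intro mult_right_mono w_bound2[OF s]) (auto simp: LamM_def)
    qed
  qed
  also have "\<dots> = (rr s)^2 * (\<Sum>q\<in>LamM M. (\<Sum>n<M. if n < dexp q then (rr s)^n else 0) * (cmod (fourier g q))^2)"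
  proof -
    define c where "c = (\<lambda>q. (\<Sum>n<M. if n < dexp q then (rr s)^n else 0))"
    have "(\<Sum>q\<in>LamM M. ((rr s)^2 * c q) * (cmod (fourier g q))^2) = (rr s)^2 * (\<Sum>q\<in>LamM M. c q * (cmod (fourier g q))^2)"
      by (simp add: sum_distrib_left mult.assoc)
    then show ?thesis unfolding c_def .
  qed
  also have "\<dots> = (rr s)^2 * (\<Sum>n<M. (rr s)^n * N (\<lambda>x. g x - E n g x))"
    by (simp add: ident[OF g])
  finally show ?thesis .
qed

definition cylx :: "nat \<Rightarrow> Z2 \<Rightarrow> Z2 set" where "cylx n x = {y. \<forall>i<n. y i = x i}"

lemma open_cylx: "open (cylx n x)"
proof -
  have "open {f. \<forall>i\<in>{..<n}. f (id i) \<in> (\<lambda>i. {x i}) i}"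
    by (rule product_topology_basis') (auto simp: discrete_topology_class.open_discrete)
  moreover have "{f. \<forall>i\<in>{..<n}. f (id i) \<in> (\<lambda>i. {x i}) i} = cylx n x" by (auto simp: cylx_def)
  ultimately show ?thesis by simp
qed

lemma open_contains_cylx:
  assumes "open U" "x \<in> U" shows "\<exists>n. cylx n x \<subseteq> U"
proof -
  have "openin (product_topology (\<lambda>i. euclidean) UNIV) U" using assms(1) by (simp add: open_fun_def)
  then obtain V where V: "finite {i \<in> UNIV. V i \<noteq> topspace euclidean}" "x \<in> PiE UNIV V" "PiE UNIV V \<subseteq> U"
    using assms(2) unfolding openin_product_topology_alt by blast
  define F where "F = {i. V i \<noteq> UNIV}"
  have F: "finite F" using V(1) by (simp add: F_def)
  define n where "n = Suc (Max (insert 0 F))"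
  have "cylx n x \<subseteq> PiE UNIV V"
  proof
    fix y assume y: "y \<in> cylx n x"
    have "y i \<in> V i" for i
    proof (cases "i \<in> F")
      case True
      then have "i < n" using F by (simp add: n_def le_imp_less_Suc)
      then have "y i = x i" using y by (simp add: cylx_def)
      then show ?thesis using V(2) by (simp add: PiE_iff)
    next
      case False then show ?thesis by (simp add: F_def)
    qed
    then show "y \<in> PiE UNIV V" by (simp add: PiE_iff)
  qed
  then show ?thesis using V(3) by blast
qed

lemma compact_Z2: "compact (UNIV :: Z2 set)"
proof -
  have "compact_space (euclidean :: bool topology)"
    unfolding compact_space_def by (simp add: finite_imp_compact)
  then have "compact_space (product_topology (\<lambda>i::nat. euclidean :: bool topology) UNIV)"
    by (simp add: compact_space_product_topology)
  then show ?thesis unfolding euclidean_product_topology compact_space_def by simp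
qed

lemma lc_Dn: assumes "locally_constant g" shows "\<exists>M. Dn M g"
proof -
  have ex: "\<forall>x. \<exists>n. \<forall>y\<in>cylx n x. g y = g x"
  proof
    fix x
    obtain U where U: "open U" "x \<in> U" "\<forall>y\<in>U. g y = g x" using assms unfolding locally_constant_def by blast
    obtain n where "cylx n x \<subseteq> U" using open_contains_cylx[OF U(1,2)] by blast
    then show "\<exists>n. \<forall>y\<in>cylx n x. g y = g x" using U(3) by blast
  qed
  obtain nn where nn0: "\<forall>x. \<forall>y\<in>cylx (nn x) x. g y = g x" using choice[OF ex] by blast
  have nn: "\<And>x y. y \<in> cylx (nn x) x \<Longrightarrow> g y = g x" using nn0 by blast
  have cov: "UNIV \<subseteq> (\<Union>x\<in>UNIV. cylx (nn x) x)" by (auto simp: cylx_def)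
  obtain P where P: "P \<subseteq> UNIV" "finite P" "UNIV \<subseteq> (\<Union>x\<in>P. cylx (nn x) x)"
    by (rule compactE_image[OF compact_Z2 open_cylx cov])
  define M where "M = Max (insert 0 (nn ` P))"
  have "Dn M g"
  proof (rule DnI)
    fix y z assume yz: "trunc2 y M = trunc2 z M"
    then have eq: "\<forall>i<M. y i = z i" by (simp add: trunc2_eq_iff)
    obtain p where p: "p \<in> P" "y \<in> cylx (nn p) p" using P(3) by blast
    have le: "nn p \<le> M" using p(1) P(2) by (simp add: M_def)
    have z: "z \<in> cylx (nn p) p" using p(2) eq le by (auto simp: cylx_def)
    show "g y = g z" using nn[OF p(2)] nn[OF z] by simp
  qed
  then show ?thesis by blast
qed

lemma Dn_lc: assumes "Dn M g" shows "locally_constant g"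
  unfolding locally_constant_def
proof
  fix x
  have "\<forall>y\<in>cylx M x. g y = g x"
  proof
    fix y assume "y \<in> cylx M x"
    then have "trunc2 y M = trunc2 x M" by (simp add: cylx_def trunc2_eq_iff)
    then show "g y = g x" by (rule DnD[OF assms])
  qed
  moreover have "x \<in> cylx M x" by (simp add: cylx_def)
  ultimately show "\<exists>U. open U \<and> x \<in> U \<and> (\<forall>y\<in>U. g y = g x)" using open_cylx[of M x] by blast
qed

lemma N_sym: "N (\<lambda>x. f x - g x) = N (\<lambda>x. g x - f x)"
  by (simp add: N_def norm_minus_commute)

lemma term_eq: assumes "f \<in> L2"
  shows "(L2norm (\<lambda>x. f x - P n f x))^2 * 2 powr (2 * real n * s) = (rr s)^n * N (\<lambda>x. f x - E n f x)"
  using P_E[OF L2_integrable[OF assms]] by (simp add: L2norm_sq rr_pow)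

lemma Hs_norm_sym: "Hs_norm s (\<lambda>x. g x - h x) = Hs_norm s (\<lambda>x. h x - g x)"
proof -
  have "fourier (\<lambda>x. g x - h x) q = - fourier (\<lambda>x. h x - g x) q" for q
  proof -
    have "(\<lambda>x. chr q x * (g x - h x)) = (\<lambda>x. - (chr q x * (h x - g x)))" by (simp add: algebra_simps)
    then show ?thesis unfolding fourier_def by simp
  qed
  then show ?thesis unfolding Hs_norm_def by simp
qed

lemma E_int: assumes "integrable haar2 f" shows "integral\<^sup>L haar2 (E n f) = integral\<^sup>L haar2 f"
proof -
  have "integral\<^sup>L haar2 (\<lambda>x. 1 * (f x - E n f x)) = 0" by (rule E_orth[OF assms Dn_const])
  then have "integral\<^sup>L haar2 (\<lambda>x. f x - E n f x) = 0" by simp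
  then show ?thesis using Bochner_Integration.integral_diff[OF assms E_integrable, of n] by simp
qed

lemma E_EmEn: assumes f: "integrable haar2 f" and nm: "n \<le> m"
  shows "E m (\<lambda>x. f x - E n f x) = (\<lambda>x. E m f x - E n f x)"
  using E_diff[OF f E_integrable, of m n] E_Dn_mono[OF Dn_E nm] by simp

lemma level_bound:
  assumes f: "f \<in> L2" and nm: "n \<le> m" and jm: "j \<le> m"
  shows "N (\<lambda>x. (E m f x - E n f x) - E j (\<lambda>x. E m f x - E n f x) x) \<le> N (\<lambda>x. f x - E (max j n) f x)"
proof -
  have fi: "integrable haar2 f" by (rule L2_integrable[OF f])
  have Ej: "E j (\<lambda>x. E m f x - E n f x) = (\<lambda>x. E j (E m f) x - E j (E n f) x)"
    by (rule E_diff[OF E_integrable E_integrable])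
  have Ejm: "E j (E m f) = E j f" by (rule E_E[OF fi jm])
  show ?thesis
  proof (cases "j \<le> n")
    case True
    have "E j (E n f) = E j f" by (rule E_E[OF fi True])
    then have "(\<lambda>x. (E m f x - E n f x) - E j (\<lambda>x. E m f x - E n f x) x) = E m (\<lambda>x. f x - E n f x)"
      using Ej Ejm E_EmEn[OF fi nm] by simp
    moreover have "N (E m (\<lambda>x. f x - E n f x)) \<le> N (\<lambda>x. f x - E n f x)"
      by (rule N_E_le(2)[OF L2_diff[OF f Dn_L2[OF Dn_E]]])
    ultimately show ?thesis using True by (simp add: max_def)
  next
    case False
    have "E j (E n f) = E n f" using False by (intro E_Dn_mono[OF Dn_E]) simp
    then have "(\<lambda>x. (E m f x - E n f x) - E j (\<lambda>x. E m f x - E n f x) x) = E m (\<lambda>x. f x - E j f x)"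
      using Ej Ejm E_EmEn[OF fi jm] by simp
    moreover have "N (E m (\<lambda>x. f x - E j f x)) \<le> N (\<lambda>x. f x - E j f x)"
      by (rule N_E_le(2)[OF L2_diff[OF f Dn_L2[OF Dn_E]]])
    ultimately show ?thesis using False by (simp add: max_def)
  qed
qed

lemma cauchy_bound:
  assumes s: "s > 0" and f: "f \<in> L2" and sm: "summable (\<lambda>j. (rr s)^j * N (\<lambda>x. f x - E j f x))"
    and nm: "n \<le> m"
  shows "(Hs_norm s (\<lambda>x. E m f x - E n f x))^2 \<le> (rr s)^2 * (1 / (rr s - 1) + 1) * (\<Sum>i. (rr s)^(i + n) * N (\<lambda>x. f x - E (i + n) f x))"
proof -
  let ?r = "rr s"
  define a where "a = (\<lambda>j. ?r^j * N (\<lambda>x. f x - E j f x))"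
  define T where "T = (\<Sum>i. a (i + n))"
  have a0: "0 \<le> a j" for j by (simp add: a_def N_nonneg)
  have r1: "?r > 1" by (rule rr_gt1[OF s])
  have sa: "summable a" unfolding a_def by (rule sm)
  have smT: "summable (\<lambda>i. a (i + n))" using summable_iff_shift[of a n] sa by simp
  have fi: "integrable haar2 f" by (rule L2_integrable[OF f])
  define h where "h = (\<lambda>x. E m f x - E n f x)"
  have hD: "Dn m h" unfolding h_def by (intro Dn_diff Dn_E Dn_mono[OF Dn_E nm])
  have h0: "fourier h 0 = 0"
  proof -
    have "integral\<^sup>L haar2 h = integral\<^sup>L haar2 (E m f) - integral\<^sup>L haar2 (E n f)"
      unfolding h_def by (rule Bochner_Integration.integral_diff[OF E_integrable E_integrable])
    then show ?thesis by (simp add: fourier_0 E_int[OF fi])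
  qed
  have "(Hs_norm s h)^2 \<le> ?r^2 * (\<Sum>j<m. ?r^j * N (\<lambda>x. h x - E j h x))"
    by (rule ineq2[OF s hD h0])
  also have "(\<Sum>j<m. ?r^j * N (\<lambda>x. h x - E j h x)) \<le> (\<Sum>j<m. ?r^j * N (\<lambda>x. f x - E (max j n) f x))"
    unfolding h_def by (intro sum_mono mult_left_mono level_bound[OF f nm]) auto
  also have "\<dots> = (\<Sum>j<n. ?r^j * N (\<lambda>x. f x - E (max j n) f x)) + (\<Sum>j\<in>{n..<m}. ?r^j * N (\<lambda>x. f x - E (max j n) f x))"
  proof -
    define F where "F = (\<lambda>j. ?r^j * N (\<lambda>x. f x - E (max j n) f x))"
    have u: "{..<m} = {..<n} \<union> {n..<m}" using nm by auto
    have "(\<Sum>j<m. F j) = (\<Sum>j\<in>{..<n} \<union> {n..<m}. F j)" by (simp only: u)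
    also have "\<dots> = (\<Sum>j<n. F j) + (\<Sum>j\<in>{n..<m}. F j)" by (rule sum.union_disjoint) auto
    finally show ?thesis unfolding F_def .
  qed
  also have "(\<Sum>j<n. ?r^j * N (\<lambda>x. f x - E (max j n) f x)) = (\<Sum>j<n. if j < n then ?r^j else 0) * N (\<lambda>x. f x - E n f x)"
    by (simp add: sum_distrib_right max_def)
  also have "\<dots> \<le> (?r^n / (?r - 1)) * N (\<lambda>x. f x - E n f x)"
    by (intro mult_right_mono csum_le[OF s] N_nonneg)
  also have "\<dots> = a n / (?r - 1)" by (simp add: a_def)
  also have "(\<Sum>j\<in>{n..<m}. ?r^j * N (\<lambda>x. f x - E (max j n) f x)) = (\<Sum>i<m - n. a (i + n))"
  proof -
    have "(\<Sum>j\<in>{n..<m}. ?r^j * N (\<lambda>x. f x - E (max j n) f x)) = (\<Sum>j\<in>{n..<m}. a j)"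
      by (intro sum.cong refl) (auto simp: a_def max_absorb1)
    also have "\<dots> = sum a {0 + n..<(m - n) + n}" using nm by simp
    also have "\<dots> = (\<Sum>i\<in>{0..<m - n}. a (i + n))" by (rule sum.shift_bounds_nat_ivl)
    also have "\<dots> = (\<Sum>i<m - n. a (i + n))" by (simp add: atLeast0LessThan)
    finally show ?thesis .
  qed
  also have "(\<Sum>i<m - n. a (i + n)) \<le> T"
    unfolding T_def by (rule sum_le_suminf[OF smT]) (auto simp: a0)
  also have "a n \<le> T"
  proof -
    have "(\<Sum>i\<in>{0}. a (i + n)) \<le> T" unfolding T_def by (rule sum_le_suminf[OF smT]) (auto simp: a0)
    then show ?thesis by simp
  qed
  then have "a n / (?r - 1) \<le> T / (?r - 1)" using r1 by (intro divide_right_mono) auto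
  ultimately have "(Hs_norm s h)^2 \<le> ?r^2 * (T / (?r - 1) + T)"
    by (smt (verit) mult_left_mono zero_le_power2)
  also have "\<dots> = ?r^2 * (1 / (?r - 1) + 1) * T" by (simp add: algebra_simps)
  finally show ?thesis unfolding h_def T_def a_def by simp
qed

lemma L2norm_N: "L2norm u = sqrt (N u)" by (simp add: L2norm_def N_def)

lemma Hs_nonneg: "Hs_norm s g \<ge> 0"
  unfolding Hs_norm_def by (intro real_sqrt_ge_zero infsum_nonneg) auto

lemma As_sub_Hs: assumes s: "s > 0" and f: "f \<in> As s" shows "f \<in> Hs s"
proof -
  let ?r = "rr s"
  have fL: "f \<in> L2" using f by (simp add: As_def)
  define a where "a = (\<lambda>j. ?r^j * N (\<lambda>x. f x - E j f x))"
  have "summable (\<lambda>n. (L2norm (\<lambda>x. f x - P n f x))^2 * 2 powr (2 * real n * s))"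
    using f by (simp add: As_def)
  also have "(\<lambda>n. (L2norm (\<lambda>x. f x - P n f x))^2 * 2 powr (2 * real n * s)) = a"
    unfolding a_def by (rule ext) (rule term_eq[OF fL])
  finally have sa: "summable a" .
  have a0: "0 \<le> a j" for j by (simp add: a_def N_nonneg)
  have r1: "?r > 1" by (rule rr_gt1[OF s])
  define K where "K = ?r^2 * (1 / (?r - 1) + 1)"
  have K0: "K > 0"
  proof -
    have "1 / (?r - 1) > 0" using r1 by simp
    then have "1 / (?r - 1) + 1 > 0" by linarith
    moreover have "?r^2 > 0" using r1 by simp
    ultimately show ?thesis unfolding K_def by (rule mult_pos_pos[rotated])
  qed
  have bound: "(Hs_norm s (\<lambda>x. E m f x - E n f x))^2 \<le> K * (\<Sum>i. a (i + n))" if "n \<le> m" for m n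
    using cauchy_bound[OF s fL _ that] sa unfolding K_def a_def by simp
  have lc: "\<forall>n. locally_constant (E n f)" using Dn_lc[OF Dn_E] by blast
  have cauchy: "\<forall>e>0. \<exists>N0. \<forall>m\<ge>N0. \<forall>n\<ge>N0. Hs_norm s (\<lambda>x. E m f x - E n f x) < e"
  proof (intro allI impI)
    fix e :: real assume e: "e > 0"
    have eK: "0 < e^2 / K" using e K0 by simp
    obtain N0 where N0: "\<forall>n\<ge>N0. norm (\<Sum>i. a (i + n)) < e^2 / K"
      using suminf_exist_split[OF eK sa] by blast
    have main: "Hs_norm s (\<lambda>x. E m f x - E n f x) < e" if "N0 \<le> n" "n \<le> m" for m n
    proof -
      have "(Hs_norm s (\<lambda>x. E m f x - E n f x))^2 \<le> K * (\<Sum>i. a (i + n))" by (rule bound[OF that(2)])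
      also have "\<dots> \<le> K * norm (\<Sum>i. a (i + n))" using K0 by (intro mult_left_mono) auto
      also have "\<dots> < K * (e^2 / K)"
      proof -
        have "norm (\<Sum>i. a (i + n)) < e^2 / K" using N0 that(1) by blast
        then show ?thesis by (rule mult_strict_left_mono[OF _ K0])
      qed
      also have "\<dots> = e^2" using K0 by simp
      finally have "(Hs_norm s (\<lambda>x. E m f x - E n f x))^2 < e^2" .
      then show ?thesis by (rule power2_less_imp_less) (use e in simp)
    qed
    show "\<exists>N0. \<forall>m\<ge>N0. \<forall>n\<ge>N0. Hs_norm s (\<lambda>x. E m f x - E n f x) < e"
    proof (intro exI[of _ N0] allI impI)
      fix m n assume mn: "N0 \<le> m" "N0 \<le> n"
      show "Hs_norm s (\<lambda>x. E m f x - E n f x) < e"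
      proof (cases "n \<le> m")
        case True then show ?thesis by (rule main[OF mn(2)])
      next
        case False
        then have "Hs_norm s (\<lambda>x. E n f x - E m f x) < e" using main[OF mn(1)] by simp
        then show ?thesis by (subst Hs_norm_sym)
      qed
    qed
  qed
  have conv: "(\<lambda>n. L2norm (\<lambda>x. E n f x - f x)) \<longlonglongrightarrow> 0"
  proof -
    have le: "N (\<lambda>x. E n f x - f x) \<le> a n" for n
    proof -
      have "1 \<le> ?r^n" using r1 by simp
      then have "1 * N (\<lambda>x. f x - E n f x) \<le> ?r^n * N (\<lambda>x. f x - E n f x)"
        by (intro mult_right_mono N_nonneg)
      then show ?thesis by (simp add: a_def N_sym[of "E n f"])
    qed
    have "(\<lambda>n. N (\<lambda>x. E n f x - f x)) \<longlonglongrightarrow> 0"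
      by (rule tendsto_sandwich[where f="\<lambda>_. 0" and h=a]) (auto simp: le N_nonneg summable_LIMSEQ_zero[OF sa])
    then have "(\<lambda>n. sqrt (N (\<lambda>x. E n f x - f x))) \<longlonglongrightarrow> sqrt 0" by (rule tendsto_real_sqrt)
    then show ?thesis by (simp add: L2norm_N)
  qed
  show ?thesis unfolding Hs_def
    by (intro CollectI conjI fL exI[of _ "\<lambda>n. E n f"]) (use lc cauchy conv in auto)
qed


lemma Dn_common: assumes "Dn M1 g" "Dn M2 h" shows "Dn (max M1 M2) (\<lambda>x. g x - h x)"
  by (intro Dn_diff Dn_mono[OF assms(1)] Dn_mono[OF assms(2)]) auto

lemma decomp: assumes "integrable haar2 f" "integrable haar2 g"
  shows "(\<lambda>x. f x - E n f x) = (\<lambda>x. (g x - E n g x) + ((f x - g x) - E n (\<lambda>x. f x - g x) x))"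
  using E_diff[OF assms, of n] by (auto simp: algebra_simps)

lemma Hs_sub_As: assumes s: "s > 0" and f: "f \<in> Hs s" shows "f \<in> As s"
proof -
  let ?r = "rr s"
  have r1: "?r > 1" by (rule rr_gt1[OF s])
  have fL: "f \<in> L2" using f by (simp add: Hs_def)
  have fi: "integrable haar2 f" by (rule L2_integrable[OF fL])
  obtain g where lc: "\<forall>n. locally_constant (g n)"
    and cau: "\<forall>e>0. \<exists>N. \<forall>m\<ge>N. \<forall>n\<ge>N. Hs_norm s (\<lambda>x. g m x - g n x) < e"
    and conv: "(\<lambda>n. L2norm (\<lambda>x. g n x - f x)) \<longlonglongrightarrow> 0"
    using f by (auto simp: Hs_def)
  obtain N0 where N0: "\<forall>m\<ge>N0. \<forall>n\<ge>N0. Hs_norm s (\<lambda>x. g m x - g n x) < 1"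
    using cau by (meson zero_less_one)
  have gD: "\<exists>M. Dn M (g k)" for k using lc lc_Dn by blast
  then obtain MM where MM: "\<And>k. Dn (MM k) (g k)" by metis
  define G where "G = g N0"
  define B where "B = (Hs_norm s G)^2"
  have GD: "Dn (MM N0) G" unfolding G_def by (rule MM)
  define d where "d = (\<lambda>k. N (\<lambda>x. f x - g k x))"
  have d0: "d \<longlonglongrightarrow> 0"
  proof -
    have "(\<lambda>k. (L2norm (\<lambda>x. g k x - f x))^2) \<longlonglongrightarrow> 0^2" by (intro tendsto_power conv)
    then show ?thesis by (simp add: d_def L2norm_sq N_sym[of f])
  qed
  define a where "a = (\<lambda>j. ?r^j * N (\<lambda>x. f x - E j f x))"
  have a0: "0 \<le> a j" for j by (simp add: a_def N_nonneg)
  define C0 where "C0 = 4 / (?r - 1) + 4 * B / (?r - 1)"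
  have perk: "(\<Sum>n<L. a n) \<le> C0 + 2 * (\<Sum>n<L. ?r^n) * d k" if k: "k \<ge> N0" for L k
  proof -
    define u where "u = (\<lambda>x. g k x - G x)"
    have uD: "Dn (max (MM k) (MM N0)) u" unfolding u_def by (rule Dn_common[OF MM GD])
    have gk: "g k \<in> L2" by (rule Dn_L2[OF MM])
    have gki: "integrable haar2 (g k)" by (rule Dn_integrable(1)[OF MM])
    have GL: "G \<in> L2" by (rule Dn_L2[OF GD])
    have Gi: "integrable haar2 G" by (rule Dn_integrable(1)[OF GD])
    have uL: "u \<in> L2" by (rule Dn_L2[OF uD])
    have fgL: "(\<lambda>x. f x - g k x) \<in> L2" by (rule L2_diff[OF fL gk])
    have Hu: "(Hs_norm s u)^2 \<le> 1"
    proof -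
      have "Hs_norm s u < 1" unfolding u_def G_def using N0 k by blast
      then show ?thesis using Hs_nonneg[of s u] by (simp add: power_le_one)
    qed
    have pt: "a n \<le> 4 * (?r^n * N (\<lambda>x. u x - E n u x)) + 4 * (?r^n * N (\<lambda>x. G x - E n G x)) + 2 * (?r^n * d k)" for n
    proof -
      have L1: "(\<lambda>x. g k x - E n (g k) x) \<in> L2" by (rule L2_diff[OF gk Dn_L2[OF Dn_E]])
      have L2': "(\<lambda>x. (f x - g k x) - E n (\<lambda>x. f x - g k x) x) \<in> L2" by (rule L2_diff[OF fgL Dn_L2[OF Dn_E]])
      have "N (\<lambda>x. f x - E n f x) = N (\<lambda>x. (g k x - E n (g k) x) + ((f x - g k x) - E n (\<lambda>x. f x - g k x) x))"
        by (simp only: decomp[OF fi gki, of n])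
      also have "\<dots> \<le> 2 * N (\<lambda>x. g k x - E n (g k) x) + 2 * N (\<lambda>x. (f x - g k x) - E n (\<lambda>x. f x - g k x) x)"
        by (rule N_diff_le[OF L1 L2'])
      also have "N (\<lambda>x. (f x - g k x) - E n (\<lambda>x. f x - g k x) x) \<le> d k"
        unfolding d_def by (rule N_E_le(1)[OF fgL])
      also have "N (\<lambda>x. g k x - E n (g k) x) \<le> 2 * N (\<lambda>x. u x - E n u x) + 2 * N (\<lambda>x. G x - E n G x)"
      proof -
        have uG: "(\<lambda>x. g k x - E n (g k) x) = (\<lambda>x. (G x - E n G x) + (u x - E n u x))"
          using decomp[OF gki Gi, of n] unfolding u_def by simp
        have "N (\<lambda>x. g k x - E n (g k) x) \<le> 2 * N (\<lambda>x. G x - E n G x) + 2 * N (\<lambda>x. u x - E n u x)"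
          unfolding uG by (rule N_diff_le[OF L2_diff[OF GL Dn_L2[OF Dn_E]] L2_diff[OF uL Dn_L2[OF Dn_E]]])
        then show ?thesis by simp
      qed
      finally have "N (\<lambda>x. f x - E n f x) \<le> 4 * N (\<lambda>x. u x - E n u x) + 4 * N (\<lambda>x. G x - E n G x) + 2 * d k"
        by simp
      then have "?r^n * N (\<lambda>x. f x - E n f x) \<le> ?r^n * (4 * N (\<lambda>x. u x - E n u x) + 4 * N (\<lambda>x. G x - E n G x) + 2 * d k)"
        by (intro mult_left_mono) auto
      then show ?thesis unfolding a_def by (simp add: algebra_simps)
    qed
    have "(\<Sum>n<L. a n) \<le> (\<Sum>n<L. 4 * (?r^n * N (\<lambda>x. u x - E n u x)) + 4 * (?r^n * N (\<lambda>x. G x - E n G x)) + 2 * (?r^n * d k))"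
      by (rule sum_mono) (rule pt)
    also have "\<dots> = 4 * (\<Sum>n<L. ?r^n * N (\<lambda>x. u x - E n u x)) + 4 * (\<Sum>n<L. ?r^n * N (\<lambda>x. G x - E n G x)) + 2 * (\<Sum>n<L. ?r^n) * d k"
      by (simp add: sum.distrib sum_distrib_left sum_distrib_right mult.assoc)
    also have "(\<Sum>n<L. ?r^n * N (\<lambda>x. u x - E n u x)) \<le> 1 / (?r - 1)"
    proof -
      have "(\<Sum>n<L. ?r^n * N (\<lambda>x. u x - E n u x)) \<le> (Hs_norm s u)^2 / (?r - 1)" by (rule ineq1[OF s uD])
      also have "\<dots> \<le> 1 / (?r - 1)" using Hu r1 by (intro divide_right_mono) auto
      finally show ?thesis .
    qed
    also have "(\<Sum>n<L. ?r^n * N (\<lambda>x. G x - E n G x)) \<le> B / (?r - 1)"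
      unfolding B_def by (rule ineq1[OF s GD])
    finally show ?thesis by (simp add: C0_def)
  qed
  have bnd: "(\<Sum>n<L. a n) \<le> C0" for L
  proof -
    have lim: "(\<lambda>k. C0 + 2 * (\<Sum>n<L. ?r^n) * d k) \<longlonglongrightarrow> C0 + 2 * (\<Sum>n<L. ?r^n) * 0"
      by (intro tendsto_intros d0)
    show ?thesis using LIMSEQ_le_const[OF lim] perk by auto
  qed
  have "summable a"
  proof (rule bounded_imp_summable[of _ C0])
    show "\<And>n. 0 \<le> a n" by (rule a0)
    fix n show "(\<Sum>k\<le>n. a k) \<le> C0" using bnd[of "Suc n"] by (simp only: lessThan_Suc_atMost)
  qed
  also have "a = (\<lambda>n. (L2norm (\<lambda>x. f x - P n f x))^2 * 2 powr (2 * real n * s))"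
    unfolding a_def by (rule ext) (rule term_eq[OF fL, symmetric])
  finally show ?thesis unfolding As_def using fL by blast
qed

theorem propositionB3:
  fixes s :: real
  assumes "s > 0"
  shows "Hs s = As s"
  using Hs_sub_As[OF assms] As_sub_Hs[OF assms] by blast

end
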